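(* Let $\ell\ge7$ and let $F$ be an apexed $\ell$-frame. Then every two holes of $F$ are equivalent.
   Context: A hole is an induced cycle of length at least four. Two holes $C,C'$ are close if $|V(C)\cap V(C')|\ge4$, and equivalent if there is a sequence of holes $C=C_1,\dots,C_n=C'$ with $C_i,C_{i+1}$ close for $1\le i<n$. A threshold graph is a graph with no induced four-vertex path, four-vertex cycle, or complement of a four-vertex cycle. $\ell$-frame for odd $\ell$: let $k\ge3$ and $a_1,\dots,a_k,b_1,\dots,b_k$ be distinct; for $1\le i\le k$, $P_i$ is a path of length $(\ell-3)/2$ with ends $a_i,b_i$, pairwise vertex-disjoint. $A,B$ are threshold graphs on $\{a_1,\dots,a_k\}$ and $\{b_1,\dots,b_k\}$ with $b_ib_j$ an edge iff $a_ia_j$ is not, each of $A,B$ either disconnected or two-connected. The $\ell$-frame is $A\cup B\cup P_1\cup\dots\cup P_k$ (no other edges). Exactly one of $A,B$ is disconnected; the apexed $\ell$-frame adds a new vertex adjacent exactly to all vertices of the disconnected one. $\ell$-frame for even $\ell$: let $m\ge0$, $n\ge2$, $m+n\ge3$, and $a_1,\dots,a_n,c_1,\dots,c_m,b_1,\dots,b_n,d_1,\dots,d_m$ distinct. $P_i$ ($1\le i\le n$) is a path of length $\ell/2-2$ between $a_i,b_i$; $Q_i$ ($1\le i\le m$) a path of length $\ell/2-1$ between $c_i,d_i$; all pairwise disjoint. $A$ on $\{a_i\}\cup\{c_j\}$ and $B$ on $\{b_i\}\cup\{d_j\}$: $\{c_j\},\{d_j\}$ cliques; $\{a_i\},\{b_i\}$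 stable; the bipartite graph of $A$ between $\{a_i\}$ and $\{c_j\}$ has no induced two-edge matching; $b_id_j$ is an edge iff $a_ic_j$ is not; some $a_i$ has degree zero in $A$ and some $b_i$ degree zero in $B$; no other edges. The $\ell$-frame is $A\cup B\cup\bigcup P_i\cup\bigcup Q_j$; the apexed $\ell$-frame adds a new vertex adjacent exactly to $V(A)$ and a new vertex adjacent exactly to $V(B)$. *)

theory Defs
  imports Main
begin

text \<open>A graph is given by a vertex set V and a symmetric adjacency relation E.
  Holes are identified with their vertex sets (they are induced subgraphs).\<close>

definition hole :: "'a set \<Rightarrow> ('a \<Rightarrow> 'a \<Rightarrow> bool) \<Rightarrow> 'a set \<Rightarrow> bool" where
  "hole V E C \<longleftrightarrow> (\<exists>xs. distinct xs \<and> length xs \<ge> 4 \<and> set xs = C \<and> C \<subseteq> V \<and>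
     (\<forall>i<length xs. \<forall>j<length xs.
        E (xs ! i) (xs ! j) \<longleftrightarrow> (j = Suc i mod length xs \<or> i = Suc j mod length xs)))"

definition holes_close :: "'a set \<Rightarrow> 'a set \<Rightarrow> bool" where
  "holes_close C C' \<longleftrightarrow> card (C \<inter> C') \<ge> 4"

definition holes_equivalent :: "'a set \<Rightarrow> ('a \<Rightarrow> 'a \<Rightarrow> bool) \<Rightarrow> 'a set \<Rightarrow> 'a set \<Rightarrow> bool" where
  "holes_equivalent V E C C' \<longleftrightarrow>
     (\<lambda>X Y. hole V E X \<and> hole V E Y \<and> holes_close X Y)\<^sup>*\<^sup>* C C'"

definition connected_graph :: "'a set \<Rightarrow> ('a \<Rightarrow> 'a \<Rightarrow> bool) \<Rightarrow> bool" where
  "connected_graph S R \<longleftrightarrow> S \<noteq> {} \<and>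
     (\<forall>x\<in>S. \<forall>y\<in>S. (\<lambda>u v. u \<in> S \<and> v \<in> S \<and> R u v)\<^sup>*\<^sup>* x y)"

definition two_connected :: "'a set \<Rightarrow> ('a \<Rightarrow> 'a \<Rightarrow> bool) \<Rightarrow> bool" where
  "two_connected S R \<longleftrightarrow> finite S \<and> card S \<ge> 3 \<and> connected_graph S R \<and>
     (\<forall>v\<in>S. connected_graph (S - {v}) R)"

definition threshold_graph :: "'a set \<Rightarrow> ('a \<Rightarrow> 'a \<Rightarrow> bool) \<Rightarrow> bool" where
  "threshold_graph S R \<longleftrightarrow> \<not> (\<exists>p\<in>S. \<exists>q\<in>S. \<exists>r\<in>S. \<exists>s\<in>S. distinct [p, q, r, s] \<and>
     ( \<comment> \<open>induced P4 p-q-r-s\<close>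
       (R p q \<and> R q r \<and> R r s \<and> \<not> R p r \<and> \<not> R q s \<and> \<not> R p s) \<or>
       \<comment> \<open>induced C4 p-q-r-s-p\<close>
       (R p q \<and> R q r \<and> R r s \<and> R s p \<and> \<not> R p r \<and> \<not> R q s) \<or>
       \<comment> \<open>induced 2K2 (complement of C4): edges pq, rs\<close>
       (R p q \<and> R r s \<and> \<not> R p r \<and> \<not> R p s \<and> \<not> R q r \<and> \<not> R q s)))"

text \<open>Paths: a list of distinct vertices; length L means L edges.\<close>

definition is_path :: "'a list \<Rightarrow> nat \<Rightarrow> 'a \<Rightarrow> 'a \<Rightarrow> bool" where
  "is_path p L u v \<longleftrightarrow> distinct p \<and> length p = Suc L \<and> hd p = u \<and> last p = v"

definition path_edge :: "'a list \<Rightarrow> 'a \<Rightarrow> 'a \<Rightarrow> bool" where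
  "path_edge p x y \<longleftrightarrow> (\<exists>t. Suc t < length p \<and>
     ((x = p ! t \<and> y = p ! Suc t) \<or> (x = p ! Suc t \<and> y = p ! t)))"

text \<open>Apexed l-frame, l odd. Paths indexed by i < k; a i, b i their ends;
  EA describes the edges of A (a_i a_j), B has b_i b_j iff a_i a_j is not an edge.\<close>

definition odd_apexed_frame :: "nat \<Rightarrow> 'a set \<Rightarrow> ('a \<Rightarrow> 'a \<Rightarrow> bool) \<Rightarrow> bool" where
  "odd_apexed_frame l V E \<longleftrightarrow> odd l \<and>
   (\<exists>(k::nat) (a::nat \<Rightarrow> 'a) (b::nat \<Rightarrow> 'a) (P::nat \<Rightarrow> 'a list) (EA::nat \<Rightarrow> nat \<Rightarrow> bool) (z::'a) (N::'a set).
     let Av = a ` {..<k};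
         AE = (\<lambda>x y. \<exists>i<k. \<exists>j<k. i \<noteq> j \<and> x = a i \<and> y = a j \<and> EA i j);
         Bv = b ` {..<k};
         BE = (\<lambda>x y. \<exists>i<k. \<exists>j<k. i \<noteq> j \<and> x = b i \<and> y = b j \<and> \<not> EA i j);
         W = (\<Union>i<k. set (P i))
     in k \<ge> 3 \<and> inj_on a {..<k} \<and> inj_on b {..<k} \<and> (\<forall>i<k. \<forall>j<k. a i \<noteq> b j) \<and>
        (\<forall>i<k. is_path (P i) ((l - 3) div 2) (a i) (b i)) \<and>
        (\<forall>i<k. \<forall>j<k. i \<noteq> j \<longrightarrow> set (P i) \<inter> set (P j) = {}) \<and>
        (\<forall>i j. EA i j = EA j i) \<and>
        threshold_graph Av AE \<and> threshold_graph Bv BE \<and>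
        (\<not> connected_graph Av AE \<or> two_connected Av AE) \<and>
        (\<not> connected_graph Bv BE \<or> two_connected Bv BE) \<and>
        ((\<not> connected_graph Av AE \<and> N = Av) \<or> (\<not> connected_graph Bv BE \<and> N = Bv)) \<and>
        z \<notin> W \<and> V = insert z W \<and>
        (\<forall>x y. E x y \<longleftrightarrow>
           (\<exists>i<k. path_edge (P i) x y) \<or> AE x y \<or> BE x y \<or>
           (x = z \<and> y \<in> N) \<or> (y = z \<and> x \<in> N)))"

text \<open>Apexed l-frame, l even. P i (i < n) from a i to b i, Q j (j < m) from c j to d j;
  R i j says a_i c_j is an edge of A (then b_i d_j is an edge of B iff not R i j).\<close>

definition even_apexed_frame :: "nat \<Rightarrow> 'a set \<Rightarrow> ('a \<Rightarrow> 'a \<Rightarrow> bool) \<Rightarrow> bool" where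
  "even_apexed_frame l V E \<longleftrightarrow> even l \<and>
   (\<exists>(n::nat) (m::nat) (a::nat \<Rightarrow> 'a) (b::nat \<Rightarrow> 'a) (c::nat \<Rightarrow> 'a) (d::nat \<Rightarrow> 'a)
      (P::nat \<Rightarrow> 'a list) (Q::nat \<Rightarrow> 'a list) (R::nat \<Rightarrow> nat \<Rightarrow> bool) (z1::'a) (z2::'a).
     let Av = a ` {..<n} \<union> c ` {..<m};
         AE = (\<lambda>x y. (\<exists>j<m. \<exists>j'<m. j \<noteq> j' \<and> x = c j \<and> y = c j') \<or>
                     (\<exists>i<n. \<exists>j<m. R i j \<and> ((x = a i \<and> y = c j) \<or> (x = c j \<and> y = a i))));
         Bv = b ` {..<n} \<union> d ` {..<m};
         BE = (\<lambda>x y. (\<exists>j<m. \<exists>j'<m. j \<noteq> j' \<and> x = d j \<and> y = d j') \<or>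
                     (\<exists>i<n. \<exists>j<m. \<not> R i j \<and> ((x = b i \<and> y = d j) \<or> (x = d j \<and> y = b i))));
         W = (\<Union>i<n. set (P i)) \<union> (\<Union>j<m. set (Q j))
     in n \<ge> 2 \<and> n + m \<ge> 3 \<and>
        inj_on a {..<n} \<and> inj_on b {..<n} \<and> inj_on c {..<m} \<and> inj_on d {..<m} \<and>
        a ` {..<n} \<inter> b ` {..<n} = {} \<and> a ` {..<n} \<inter> c ` {..<m} = {} \<and>
        a ` {..<n} \<inter> d ` {..<m} = {} \<and> b ` {..<n} \<inter> c ` {..<m} = {} \<and>
        b ` {..<n} \<inter> d ` {..<m} = {} \<and> c ` {..<m} \<inter> d ` {..<m} = {} \<and>
        (\<forall>i<n. is_path (P i) (l div 2 - 2) (a i) (b i)) \<and>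
        (\<forall>j<m. is_path (Q j) (l div 2 - 1) (c j) (d j)) \<and>
        (\<forall>i<n. \<forall>i'<n. i \<noteq> i' \<longrightarrow> set (P i) \<inter> set (P i') = {}) \<and>
        (\<forall>j<m. \<forall>j'<m. j \<noteq> j' \<longrightarrow> set (Q j) \<inter> set (Q j') = {}) \<and>
        (\<forall>i<n. \<forall>j<m. set (P i) \<inter> set (Q j) = {}) \<and>
        \<comment> \<open>no induced two-edge matching in the bipartite graph between {a_i} and {c_j}\<close>
        \<not> (\<exists>i<n. \<exists>i'<n. \<exists>j<m. \<exists>j'<m. R i j \<and> R i' j' \<and> \<not> R i j' \<and> \<not> R i' j) \<and>
        \<comment> \<open>some a_i has degree zero in A, some b_i has degree zero in B\<close>
        (\<exists>i<n. \<forall>j<m. \<not> R i j) \<and> (\<exists>i<n. \<forall>j<m. R i j) \<and>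
        z1 \<noteq> z2 \<and> z1 \<notin> W \<and> z2 \<notin> W \<and> V = {z1, z2} \<union> W \<and>
        (\<forall>x y. E x y \<longleftrightarrow>
           (\<exists>i<n. path_edge (P i) x y) \<or> (\<exists>j<m. path_edge (Q j) x y) \<or> AE x y \<or> BE x y \<or>
           (x = z1 \<and> y \<in> Av) \<or> (y = z1 \<and> x \<in> Av) \<or>
           (x = z2 \<and> y \<in> Bv) \<or> (y = z2 \<and> x \<in> Bv)))"

definition apexed_frame :: "nat \<Rightarrow> 'a set \<Rightarrow> ('a \<Rightarrow> 'a \<Rightarrow> bool) \<Rightarrow> bool" where
  "apexed_frame l V E \<longleftrightarrow> odd_apexed_frame l V E \<or> even_apexed_frame l V E"

end

theory Submission
  imports Defs
begin


lemma path_edge_mem: "path_edge p x y \<Longrightarrow> x \<in> set p \<and> y \<in> set p"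
  unfolding path_edge_def by (auto intro: nth_mem)

lemma path_edge_sym: "path_edge p x y \<Longrightarrow> path_edge p y x"
  unfolding path_edge_def by blast

lemma path_edge_irr: "distinct p \<Longrightarrow> \<not> path_edge p x x"
  unfolding path_edge_def by (auto simp: nth_eq_iff_index_eq)

lemma path_edge_nth:
  assumes "distinct p" "i < length p" "j < length p"
  shows "path_edge p (p!i) (p!j) \<longleftrightarrow> (j = Suc i \<or> i = Suc j)"
proof
  assume "path_edge p (p!i) (p!j)"
  then obtain t where t: "Suc t < length p" "(p!i = p!t \<and> p!j = p!Suc t) \<or> (p!i = p!Suc t \<and> p!j = p!t)"
    unfolding path_edge_def by blast
  then show "j = Suc i \<or> i = Suc j" using assms by (auto simp: nth_eq_iff_index_eq)
next
  assume "j = Suc i \<or> i = Suc j"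
  then show "path_edge p (p!i) (p!j)" unfolding path_edge_def using assms by auto
qed

lemma path_edge_rev: "path_edge (rev p) x y \<longleftrightarrow> path_edge p x y"
proof -
  have *: "path_edge (rev p) x y" if "path_edge p x y" for p :: "'b list" and x y
  proof -
    from that obtain t where t: "Suc t < length p" "(x = p!t \<and> y = p!Suc t) \<or> (x = p!Suc t \<and> y = p!t)"
      unfolding path_edge_def by blast
    define t' where "t' = length p - Suc (Suc t)"
    have "Suc t' < length (rev p)" using t(1) by (simp add: t'_def)
    moreover have "rev p ! t' = p ! Suc t" "rev p ! Suc t' = p ! t"
      using t(1) by (simp_all add: rev_nth t'_def Suc_diff_Suc)
    ultimately show ?thesis unfolding path_edge_def using t(2) by metis
  qed
  show ?thesis using *[of p x y] *[of "rev p" x y] by auto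
qed

definition ipath :: "('a \<Rightarrow> 'a \<Rightarrow> bool) \<Rightarrow> 'a list \<Rightarrow> bool" where
  "ipath E xs \<longleftrightarrow> distinct xs \<and>
     (\<forall>p<length xs. \<forall>q<length xs. E (xs!p) (xs!q) \<longleftrightarrow> (q = Suc p \<or> p = Suc q))"

lemma ipath_E: "ipath E xs \<Longrightarrow> p < length xs \<Longrightarrow> q < length xs \<Longrightarrow> E (xs!p) (xs!q) \<longleftrightarrow> (q = Suc p \<or> p = Suc q)"
  unfolding ipath_def by blast

lemma ipath_single: "\<not> E y y \<Longrightarrow> ipath E [y]"
  unfolding ipath_def by auto

lemma ipath_Nil: "ipath E []"
  unfolding ipath_def by auto

lemma ipath_short: "length xs \<le> 1 \<Longrightarrow> (\<forall>y\<in>set xs. \<not> E y y) \<Longrightarrow> ipath E xs"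
  by (cases xs) (auto simp: ipath_Nil ipath_single)

lemma ipath_tl: assumes "ipath E xs" shows "ipath E (tl xs)"
proof (cases xs)
  case Nil then show ?thesis using assms by simp
next
  case (Cons a ys)
  have d: "distinct ys" using assms Cons by (simp add: ipath_def)
  have "\<forall>p<length ys. \<forall>q<length ys. E (ys!p) (ys!q) \<longleftrightarrow> (q = Suc p \<or> p = Suc q)"
  proof (intro allI impI)
    fix p q assume pq: "p < length ys" "q < length ys"
    have H: "\<forall>p<length xs. \<forall>q<length xs. E (xs!p) (xs!q) \<longleftrightarrow> (q = Suc p \<or> p = Suc q)"
      using assms by (simp add: ipath_def)
    have "Suc p < length xs" "Suc q < length xs" using pq Cons by auto
    from H[rule_format, OF this]
    have "E (xs ! Suc p) (xs ! Suc q) \<longleftrightarrow> (Suc q = Suc (Suc p) \<or> Suc p = Suc (Suc q))" .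
    then show "E (ys!p) (ys!q) \<longleftrightarrow> (q = Suc p \<or> p = Suc q)" using Cons by simp
  qed
  then show ?thesis using d Cons by (simp add: ipath_def)
qed

lemma ipath_rev:
  assumes sym: "\<And>x y. E x y \<Longrightarrow> E y x" and "ipath E xs"
  shows "ipath E (rev xs)"
  unfolding ipath_def
proof (intro conjI allI impI)
  show "distinct (rev xs)" using assms(2) by (simp add: ipath_def)
  fix p q assume pq: "p < length (rev xs)" "q < length (rev xs)"
  let ?n = "length xs"
  have "E (rev xs ! p) (rev xs ! q) \<longleftrightarrow> E (xs ! (?n - Suc p)) (xs ! (?n - Suc q))"
    using pq by (simp add: rev_nth)
  also have "\<dots> \<longleftrightarrow> (?n - Suc q = Suc (?n - Suc p) \<or> ?n - Suc p = Suc (?n - Suc q))"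
    using assms(2) pq unfolding ipath_def by auto
  also have "\<dots> \<longleftrightarrow> (q = Suc p \<or> p = Suc q)" using pq by auto
  finally show "E (rev xs ! p) (rev xs ! q) \<longleftrightarrow> (q = Suc p \<or> p = Suc q)" .
qed

lemma ipath_append:
  assumes sym: "\<And>x y. E x y \<Longrightarrow> E y x"
    and A: "ipath E xs" and B: "ipath E ys" and D: "set xs \<inter> set ys = {}"
    and L: "xs \<noteq> [] \<Longrightarrow> ys \<noteq> [] \<Longrightarrow> E (last xs) (hd ys)"
    and X: "\<And>x y. x \<in> set xs \<Longrightarrow> y \<in> set ys \<Longrightarrow> E x y \<Longrightarrow> x = last xs \<and> y = hd ys"
  shows "ipath E (xs @ ys)"
proof (cases "xs = [] \<or> ys = []")
  case True then show ?thesis using A B by auto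
next
  case False
  let ?a = "length xs" and ?b = "length ys"
  have dx: "distinct xs" and dy: "distinct ys" using A B by (auto simp: ipath_def)
  have lx: "last xs = xs ! (?a - 1)" using False by (simp add: last_conv_nth)
  have hy: "hd ys = ys ! 0" using False by (simp add: hd_conv_nth)
  have cross: "E (xs!p) (ys!q) \<longleftrightarrow> (p = ?a - 1 \<and> q = 0)" if "p < ?a" "q < ?b" for p q
  proof
    assume "E (xs!p) (ys!q)"
    then have "xs!p = last xs" "ys!q = hd ys" using X that by (auto intro: nth_mem)
    then show "p = ?a - 1 \<and> q = 0" using that dx dy lx hy False
      by (auto simp: nth_eq_iff_index_eq)
  next
    assume "p = ?a - 1 \<and> q = 0"
    then show "E (xs!p) (ys!q)" using L False lx hy by auto
  qed
  show ?thesis unfolding ipath_def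
  proof (intro conjI allI impI)
    show "distinct (xs @ ys)" using dx dy D by auto
    fix p q assume pq: "p < length (xs @ ys)" "q < length (xs @ ys)"
    show "E ((xs @ ys) ! p) ((xs @ ys) ! q) \<longleftrightarrow> (q = Suc p \<or> p = Suc q)"
    proof (cases "p < ?a")
      case pT: True
      show ?thesis
      proof (cases "q < ?a")
        case True then show ?thesis using pT A by (simp add: nth_append ipath_def)
      next
        case False
        then have "E ((xs @ ys) ! p) ((xs @ ys) ! q) \<longleftrightarrow> (p = ?a - 1 \<and> q - ?a = 0)"
          using pT pq cross[of p "q - ?a"] by (simp add: nth_append)
        then show ?thesis using pT False by auto
      qed
    next
      case pF: False
      show ?thesis
      proof (cases "q < ?a")
        case True
        have "E ((xs @ ys) ! p) ((xs @ ys) ! q) \<longleftrightarrow> E (xs ! q) (ys ! (p - ?a))"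
          using pF True sym by (auto simp: nth_append)
        then have "E ((xs @ ys) ! p) ((xs @ ys) ! q) \<longleftrightarrow> (q = ?a - 1 \<and> p - ?a = 0)"
          using pF pq cross[of q "p - ?a"] True by simp
        then show ?thesis using pF True by auto
      next
        case False
        then have "E ((xs @ ys) ! p) ((xs @ ys) ! q) \<longleftrightarrow> (q - ?a = Suc (p - ?a) \<or> p - ?a = Suc (q - ?a))"
          using pF pq B by (simp add: nth_append ipath_def)
        then show ?thesis using pF False by auto
      qed
    qed
  qed
qed

lemma mod_one2: "(n::nat) \<ge> 2 \<Longrightarrow> Suc 0 mod n = 1"
  by simp

lemma mod_z: "(q::nat) < n \<Longrightarrow> (0 = Suc q mod n) \<longleftrightarrow> Suc q = n"
  by (cases "Suc q = n") auto

lemma mod_nz: "(p::nat) < n \<Longrightarrow> q < n \<Longrightarrow> q \<noteq> 0 \<Longrightarrow> (q = Suc p mod n) \<longleftrightarrow> q = Suc p"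
  by (cases "Suc p = n") auto

lemma hole_close:
  assumes sym: "\<And>x y. E x y \<Longrightarrow> E y x" and irr: "\<not> E x0 x0"
    and A: "ipath E ys" and nin: "x0 \<notin> set ys" and len: "length ys \<ge> 3"
    and h: "E x0 (hd ys)" and l: "E x0 (last ys)"
    and only: "\<And>y. y \<in> set ys \<Longrightarrow> E x0 y \<Longrightarrow> y = hd ys \<or> y = last ys"
    and V: "insert x0 (set ys) \<subseteq> V"
  shows "hole V E (insert x0 (set ys))"
proof -
  let ?xs = "x0 # ys" and ?n = "Suc (length ys)"
  have dy: "distinct ys" using A by (simp add: ipath_def)
  have ne: "ys \<noteq> []" using len by auto
  have hy: "hd ys = ys ! 0" and ly: "last ys = ys ! (length ys - 1)"
    using ne by (simp_all add: hd_conv_nth last_conv_nth)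
  have x0: "E x0 (ys ! q) \<longleftrightarrow> (q = 0 \<or> q = length ys - 1)" if "q < length ys" for q
  proof
    assume "E x0 (ys ! q)"
    then have "ys ! q = ys ! 0 \<or> ys ! q = ys ! (length ys - 1)" using only[of "ys!q"] that hy ly by auto
    then show "q = 0 \<or> q = length ys - 1" using nth_eq_iff_index_eq[OF dy that, of 0]
        nth_eq_iff_index_eq[OF dy that, of "length ys - 1"] len ne by force
  next
    assume "q = 0 \<or> q = length ys - 1" then show "E x0 (ys ! q)" using h l hy ly by auto
  qed
  have main: "E (?xs!p) (?xs!q) \<longleftrightarrow> (q = Suc p mod ?n \<or> p = Suc q mod ?n)" if pq: "p < ?n" "q < ?n" for p q
  proof (cases p)
    case 0
    then show ?thesis
    proof (cases q)
      case 0 then show ?thesis using \<open>p = 0\<close> irr ne by simp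
    next
      case (Suc q')
      then have "E (?xs!p) (?xs!q) \<longleftrightarrow> (q' = 0 \<or> q' = length ys - 1)" using x0[of q'] pq \<open>p = 0\<close> by simp
      moreover have "(q = Suc p mod ?n) \<longleftrightarrow> q' = 0" using \<open>p = 0\<close> Suc len mod_one2[of ?n] by simp
      moreover have "(p = Suc q mod ?n) \<longleftrightarrow> q' = length ys - 1" using \<open>p = 0\<close> Suc pq mod_z[of q ?n] by auto
      ultimately show ?thesis by blast
    qed
  next
    case (Suc p')
    then show ?thesis
    proof (cases q)
      case 0
      then have "E (?xs!p) (?xs!q) \<longleftrightarrow> (p' = 0 \<or> p' = length ys - 1)" using x0[of p'] pq Suc sym by auto
      moreover have "(p = Suc q mod ?n) \<longleftrightarrow> p' = 0" using \<open>q = 0\<close> Suc len mod_one2[of ?n] by simp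
      moreover have "(q = Suc p mod ?n) \<longleftrightarrow> p' = length ys - 1" using \<open>q = 0\<close> Suc pq mod_z[of p ?n] by auto
      ultimately show ?thesis by blast
    next
      case (Suc q')
      then have "E (?xs!p) (?xs!q) \<longleftrightarrow> (q' = Suc p' \<or> p' = Suc q')"
        using A pq \<open>p = Suc p'\<close> by (auto simp: ipath_def)
      moreover have "(q = Suc p mod ?n) \<longleftrightarrow> q = Suc p" using mod_nz[of p ?n q] pq Suc by simp
      moreover have "(p = Suc q mod ?n) \<longleftrightarrow> p = Suc q" using mod_nz[of q ?n p] pq \<open>p = Suc p'\<close> by simp
      ultimately show ?thesis using Suc \<open>p = Suc p'\<close> by simp
    qed
  qed
  show ?thesis unfolding hole_def
  proof (rule exI[of _ ?xs], intro conjI)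
    show "distinct ?xs" using dy nin by simp
    show "length ?xs \<ge> 4" using len by simp
    show "set ?xs = insert x0 (set ys)" by simp
    show "insert x0 (set ys) \<subseteq> V" using V by simp
    show "\<forall>i<length ?xs. \<forall>j<length ?xs. E (?xs ! i) (?xs ! j) \<longleftrightarrow> (j = Suc i mod length ?xs \<or> i = Suc j mod length ?xs)"
      using main by (simp only: length_Cons) blast
  qed
qed


definition nopc :: "'a set \<Rightarrow> ('a \<Rightarrow> 'a \<Rightarrow> bool) \<Rightarrow> bool" where
  "nopc S R \<longleftrightarrow> \<not> (\<exists>p\<in>S. \<exists>q\<in>S. \<exists>r\<in>S. \<exists>s\<in>S. distinct [p, q, r, s] \<and>
     ((R p q \<and> R q r \<and> R r s \<and> \<not> R p r \<and> \<not> R q s \<and> \<not> R p s) \<or>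
      (R p q \<and> R q r \<and> R r s \<and> R s p \<and> \<not> R p r \<and> \<not> R q s)))"

lemma threshold_nopc: "threshold_graph S R \<Longrightarrow> nopc S R"
  unfolding threshold_graph_def nopc_def by blast

lemma nopc_cong: "nopc S R \<Longrightarrow> (\<And>x y. x \<in> S \<Longrightarrow> y \<in> S \<Longrightarrow> R x y \<longleftrightarrow> R' x y) \<Longrightarrow> nopc S R'"
  unfolding nopc_def by (smt (verit))

lemma nopc_dom:
  assumes "nopc S R" "\<And>x. x \<in> S \<Longrightarrow> x \<noteq> z \<Longrightarrow> R z x \<and> R x z"
  shows "nopc (insert z S) R"
  unfolding nopc_def
proof
  assume "\<exists>p\<in>insert z S. \<exists>q\<in>insert z S. \<exists>r\<in>insert z S. \<exists>s\<in>insert z S. distinct [p, q, r, s] \<and>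
     ((R p q \<and> R q r \<and> R r s \<and> \<not> R p r \<and> \<not> R q s \<and> \<not> R p s) \<or>
      (R p q \<and> R q r \<and> R r s \<and> R s p \<and> \<not> R p r \<and> \<not> R q s))"
  then obtain p q r s where pqrs: "p \<in> insert z S" "q \<in> insert z S" "r \<in> insert z S" "s \<in> insert z S"
    "distinct [p, q, r, s]" "((R p q \<and> R q r \<and> R r s \<and> \<not> R p r \<and> \<not> R q s \<and> \<not> R p s) \<or>
      (R p q \<and> R q r \<and> R r s \<and> R s p \<and> \<not> R p r \<and> \<not> R q s))" by blast
  have "p \<noteq> z" using pqrs assms(2)[of r] by auto
  moreover have "q \<noteq> z" using pqrs assms(2)[of s] by auto
  moreover have "r \<noteq> z" using pqrs assms(2)[of p] by auto
  moreover have "s \<noteq> z" using pqrs assms(2)[of q] by auto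
  ultimately show False using pqrs assms(1) unfolding nopc_def by blast
qed

lemma hole_finite: "hole V E C \<Longrightarrow> finite C"
  unfolding hole_def by auto

lemma close_sub:
  assumes "hole V E X" "S \<subseteq> X \<inter> Y" "finite S" "card S \<ge> 4"
  shows "holes_close X Y"
proof -
  have "finite (X \<inter> Y)" using hole_finite[OF assms(1)] by simp
  then have "card S \<le> card (X \<inter> Y)" using assms(2) card_mono by blast
  then show ?thesis using assms(4) unfolding holes_close_def by simp
qed

lemma equiv_step: "hole V E X \<Longrightarrow> hole V E Y \<Longrightarrow> holes_close X Y \<Longrightarrow> holes_equivalent V E X Y"
  unfolding holes_equivalent_def by auto

lemma equiv_trans: "holes_equivalent V E X Y \<Longrightarrow> holes_equivalent V E Y Z \<Longrightarrow> holes_equivalent V E X Z"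
  unfolding holes_equivalent_def by (rule rtranclp_trans)

lemma equiv_sym: "holes_equivalent V E X Y \<Longrightarrow> holes_equivalent V E Y X"
  unfolding holes_equivalent_def
proof (induction rule: rtranclp_induct)
  case base then show ?case by simp
next
  case (step y z)
  have "(\<lambda>X Y. hole V E X \<and> hole V E Y \<and> holes_close X Y) z y"
    using step(2) unfolding holes_close_def by (simp add: Int_commute)
  then show ?case using step(3) by (rule converse_rtranclp_into_rtranclp)
qed

lemma cyc_two:
  fixes f :: "nat \<Rightarrow> bool"
  assumes "f n = f 0" "t0 < n" "f t0 \<noteq> f (Suc t0)"
  shows "\<exists>t1<n. t1 \<noteq> t0 \<and> f t1 \<noteq> f (Suc t1)"
proof (rule ccontr)
  assume "\<not> ?thesis"
  then have H: "\<And>t. t < n \<Longrightarrow> t \<noteq> t0 \<Longrightarrow> f t = f (Suc t)" by blast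
  have a: "j \<le> t0 \<Longrightarrow> f j = f 0" for j
    by (induction j) (use H assms(2) in auto)
  have b: "Suc t0 + d \<le> n \<Longrightarrow> f (Suc t0 + d) = f (Suc t0)" for d
    by (induction d) (use H in auto)
  have "f n = f (Suc t0)" using b[of "n - Suc t0"] assms(2) by simp
  then show False using a[of t0] assms by simp
qed

locale twoside =
  fixes V :: "'a set" and E :: "'a \<Rightarrow> 'a \<Rightarrow> bool" and I :: "'i set"
    and pi :: "'i \<Rightarrow> 'a list" and Sv Tv :: "'a set"
  assumes Esym: "\<And>x y. E x y \<Longrightarrow> E y x"
    and Eirr: "\<And>x. \<not> E x x"
    and pdist: "\<And>r. r \<in> I \<Longrightarrow> distinct (pi r)"
    and plen: "\<And>r. r \<in> I \<Longrightarrow> length (pi r) \<ge> 3"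
    and pdisj: "\<And>r r'. r \<in> I \<Longrightarrow> r' \<in> I \<Longrightarrow> r \<noteq> r' \<Longrightarrow> set (pi r) \<inter> set (pi r') = {}"
    and ST: "Sv \<inter> Tv = {}"
    and Sends: "\<And>r. r \<in> I \<Longrightarrow> Sv \<inter> set (pi r) = {hd (pi r)}"
    and Tends: "\<And>r. r \<in> I \<Longrightarrow> Tv \<inter> set (pi r) = {last (pi r)}"
    and Vsub: "V \<subseteq> Sv \<union> Tv \<union> (\<Union>r\<in>I. set (pi r))"
    and pV: "\<And>r. r \<in> I \<Longrightarrow> set (pi r) \<subseteq> V"
    and Eintro: "\<And>r x y. r \<in> I \<Longrightarrow> path_edge (pi r) x y \<Longrightarrow> E x y"
    and Ecases: "\<And>x y. E x y \<Longrightarrow> (\<exists>r\<in>I. path_edge (pi r) x y) \<or> (x \<in> Sv \<and> y \<in> Sv) \<or> (x \<in> Tv \<and> y \<in> Tv)"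
    and Sfree: "nopc Sv E" and Tfree: "nopc Tv E"
begin

lemma mem_unique: "r \<in> I \<Longrightarrow> r' \<in> I \<Longrightarrow> x \<in> set (pi r) \<Longrightarrow> x \<in> set (pi r') \<Longrightarrow> r = r'"
  using pdisj by blast

lemma hd_nth: "r \<in> I \<Longrightarrow> hd (pi r) = pi r ! 0"
  using plen[of r] by (intro hd_conv_nth) auto

lemma last_nth: "r \<in> I \<Longrightarrow> last (pi r) = pi r ! (length (pi r) - 1)"
  using plen[of r] by (intro last_conv_nth) auto

lemma S_hd: "r \<in> I \<Longrightarrow> x \<in> Sv \<Longrightarrow> x \<in> set (pi r) \<Longrightarrow> x = hd (pi r)"
  using Sends[of r] by (metis IntI singletonD)
lemma T_last: "r \<in> I \<Longrightarrow> x \<in> Tv \<Longrightarrow> x \<in> set (pi r) \<Longrightarrow> x = last (pi r)"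
  using Tends[of r] by (metis IntI singletonD)

lemma hd_S: "r \<in> I \<Longrightarrow> hd (pi r) \<in> Sv" using Sends by blast
lemma last_T: "r \<in> I \<Longrightarrow> last (pi r) \<in> Tv" using Tends by blast
lemma hd_mem: "r \<in> I \<Longrightarrow> hd (pi r) \<in> set (pi r)" using Sends by blast
lemma last_mem: "r \<in> I \<Longrightarrow> last (pi r) \<in> set (pi r)" using Tends by blast

lemma interior_notST:
  assumes "r \<in> I" "0 < s" "s < length (pi r) - 1"
  shows "pi r ! s \<notin> Sv" "pi r ! s \<notin> Tv"
proof -
  have m: "pi r ! s \<in> set (pi r)" using assms by auto
  have d: "distinct (pi r)" using pdist assms by auto
  show "pi r ! s \<notin> Sv"
  proof
    assume "pi r ! s \<in> Sv"
    then have "pi r ! s = pi r ! 0" using Sends[OF assms(1)] m hd_nth[OF assms(1)] by auto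
    moreover have "s < length (pi r)" "0 < length (pi r)" using assms by auto
    ultimately show False using nth_eq_iff_index_eq[OF d, of s 0] assms(2) by simp
  qed
  show "pi r ! s \<notin> Tv"
  proof
    assume "pi r ! s \<in> Tv"
    then have "pi r ! s = pi r ! (length (pi r) - 1)" using Tends[OF assms(1)] m last_nth[OF assms(1)] by auto
    moreover have "s < length (pi r)" "length (pi r) - 1 < length (pi r)" using assms by auto
    ultimately show False using nth_eq_iff_index_eq[OF d, of s "length (pi r) - 1"] assms(3) by simp
  qed
qed

lemma interior_nbrs:
  assumes "r \<in> I" "0 < s" "s < length (pi r) - 1" "E (pi r ! s) y"
  shows "y = pi r ! (s - 1) \<or> y = pi r ! Suc s"
proof -
  have d: "distinct (pi r)" using pdist assms by auto
  obtain r' where r': "r' \<in> I" "path_edge (pi r') (pi r ! s) y"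
    using Ecases[OF assms(4)] interior_notST[OF assms(1-3)] by blast
  have "r' = r" using mem_unique[OF r'(1) assms(1)] path_edge_mem[OF r'(2)] assms by auto
  with r' obtain t where t: "Suc t < length (pi r)"
    "(pi r ! s = pi r ! t \<and> y = pi r ! Suc t) \<or> (pi r ! s = pi r ! Suc t \<and> y = pi r ! t)"
    unfolding path_edge_def by blast
  have sl: "s < length (pi r)" using assms by auto
  from t(2) show ?thesis
  proof
    assume "pi r ! s = pi r ! t \<and> y = pi r ! Suc t"
    then have "s = t" "y = pi r ! Suc t" using nth_eq_iff_index_eq[OF d sl, of t] t(1) by auto
    then show ?thesis by simp
  next
    assume "pi r ! s = pi r ! Suc t \<and> y = pi r ! t"
    then have "s = Suc t" "y = pi r ! t" using nth_eq_iff_index_eq[OF d sl, of "Suc t"] t(1) by auto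
    then show ?thesis by simp
  qed
qed

lemma exit_lemma:
  assumes "r \<in> I" "x \<in> set (pi r)" "y \<notin> set (pi r)" "E x y"
  shows "(x = hd (pi r) \<and> y \<in> Sv) \<or> (x = last (pi r) \<and> y \<in> Tv)"
proof -
  have "\<not> (\<exists>r'\<in>I. path_edge (pi r') x y)"
  proof
    assume "\<exists>r'\<in>I. path_edge (pi r') x y"
    then obtain r' where "r' \<in> I" "path_edge (pi r') x y" by blast
    then show False using mem_unique[of r r' x] path_edge_mem[of "pi r'" x y] assms by auto
  qed
  then have "(x \<in> Sv \<and> y \<in> Sv) \<or> (x \<in> Tv \<and> y \<in> Tv)" using Ecases[OF assms(4)] by blast
  then show ?thesis using S_hd[OF assms(1) _ assms(2)] T_last[OF assms(1) _ assms(2)] by blast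
qed

lemma ipath_pi:
  assumes "r \<in> I" shows "ipath E (pi r)"
  unfolding ipath_def
proof (intro conjI allI impI)
  have d: "distinct (pi r)" using pdist assms by auto
  show "distinct (pi r)" by fact
  fix p q assume pq: "p < length (pi r)" "q < length (pi r)"
  have "E (pi r ! p) (pi r ! q) \<longleftrightarrow> path_edge (pi r) (pi r ! p) (pi r ! q)"
  proof
    assume e: "E (pi r ! p) (pi r ! q)"
    have ne: "pi r ! p \<noteq> pi r ! q" using e Eirr by metis
    have mp: "pi r ! p \<in> set (pi r)" "pi r ! q \<in> set (pi r)" using pq by auto
    from Ecases[OF e] show "path_edge (pi r) (pi r ! p) (pi r ! q)"
    proof (elim disjE)
      assume "\<exists>r'\<in>I. path_edge (pi r') (pi r ! p) (pi r ! q)"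
      then obtain r' where "r' \<in> I" "path_edge (pi r') (pi r ! p) (pi r ! q)" by blast
      moreover then have "r' = r" using mem_unique[of r' r "pi r ! p"] assms path_edge_mem[of "pi r'" "pi r ! p" "pi r ! q"] mp by auto
      ultimately show ?thesis by simp
    next
      assume "pi r ! p \<in> Sv \<and> pi r ! q \<in> Sv"
      then show ?thesis using S_hd[OF assms] mp ne by metis
    next
      assume "pi r ! p \<in> Tv \<and> pi r ! q \<in> Tv"
      then show ?thesis using T_last[OF assms] mp ne by metis
    qed
  next
    assume "path_edge (pi r) (pi r ! p) (pi r ! q)"
    then show "E (pi r ! p) (pi r ! q)" using Eintro assms by blast
  qed
  also have "\<dots> \<longleftrightarrow> (q = Suc p \<or> p = Suc q)" using path_edge_nth[OF d pq] .
  finally show "E (pi r ! p) (pi r ! q) \<longleftrightarrow> (q = Suc p \<or> p = Suc q)" .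
qed

end


lemma hole_nbrs:
  assumes "hole V E C" "v \<in> C"
  shows "\<exists>u w. u \<noteq> w \<and> u \<in> C \<and> w \<in> C \<and> E v u \<and> E v w"
proof -
  obtain xs where xs: "distinct xs" "length xs \<ge> 4" "set xs = C"
    "\<forall>i<length xs. \<forall>j<length xs. E (xs ! i) (xs ! j) \<longleftrightarrow> (j = Suc i mod length xs \<or> i = Suc j mod length xs)"
    using assms(1) unfolding hole_def by blast
  let ?n = "length xs"
  obtain t where t: "t < ?n" "v = xs ! t" using assms(2) xs(3) by (metis in_set_conv_nth)
  define j1 where "j1 = (if Suc t = ?n then 0 else Suc t)"
  define j2 where "j2 = (if t = 0 then ?n - 1 else t - 1)"
  have j1: "j1 < ?n" "j1 = Suc t mod ?n" using t xs(2) by (auto simp: j1_def)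
  have j2: "j2 < ?n" "t = Suc j2 mod ?n" using t xs(2) by (auto simp: j2_def)
  have ne: "j1 \<noteq> j2" using t xs(2) by (auto simp: j1_def j2_def)
  show ?thesis
  proof (intro exI conjI)
    show "xs ! j1 \<noteq> xs ! j2" using ne j1 j2 xs(1) by (simp add: nth_eq_iff_index_eq)
    show "xs ! j1 \<in> C" "xs ! j2 \<in> C" using j1 j2 xs(3) by auto
    show "E v (xs ! j1)" using xs(4) t j1 by blast
    show "E v (xs ! j2)" using xs(4) t j2 by blast
  qed
qed

context twoside begin

lemma hole_interior:
  assumes C: "hole V E C" and r: "r \<in> I" and s: "0 < s" "s < length (pi r) - 1" "pi r ! s \<in> C"
  shows "set (pi r) \<subseteq> C"
proof -
  let ?p = "pi r" and ?L = "length (pi r)"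
  have d: "distinct ?p" using pdist r by auto
  have step: "pi r ! (j - 1) \<in> C \<and> pi r ! Suc j \<in> C" if jj: "0 < j" "j < ?L - 1" "pi r ! j \<in> C" for j
  proof -
    obtain u w where uw: "u \<noteq> w" "u \<in> C" "w \<in> C" "E (pi r ! j) u" "E (pi r ! j) w"
      using hole_nbrs[OF C jj(3)] by blast
    have "u = pi r ! (j - 1) \<or> u = pi r ! Suc j" using interior_nbrs[OF r jj(1,2) uw(4)] .
    moreover have "w = pi r ! (j - 1) \<or> w = pi r ! Suc j" using interior_nbrs[OF r jj(1,2) uw(5)] .
    ultimately show ?thesis using uw by auto
  qed
  have up: "s + d < ?L \<Longrightarrow> pi r ! (s + d) \<in> C" for d
  proof (induction d)
    case 0 then show ?case using s by simp
  next
    case (Suc d)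
    then have "pi r ! (s + d) \<in> C" by simp
    then show ?case using step[of "s + d"] s Suc.prems by simp
  qed
  have down: "d \<le> s \<Longrightarrow> pi r ! (s - d) \<in> C" for d
  proof (induction d)
    case 0 then show ?case using s by simp
  next
    case (Suc d)
    then have "pi r ! (s - d) \<in> C" by simp
    moreover have "s - d - 1 = s - Suc d" by simp
    ultimately show ?case using step[of "s - d"] s Suc.prems by simp
  qed
  show ?thesis
  proof
    fix x assume "x \<in> set ?p"
    then obtain j where j: "j < ?L" "x = ?p ! j" by (metis in_set_conv_nth)
    show "x \<in> C"
    proof (cases "s \<le> j")
      case True then show ?thesis using up[of "j - s"] j by simp
    next
      case False then show ?thesis using down[of "s - j"] j by simp
    qed
  qed
qed

lemma V_interior:
  assumes "x \<in> V" "x \<notin> Sv" "x \<notin> Tv"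
  shows "\<exists>r\<in>I. \<exists>s. 0 < s \<and> s < length (pi r) - 1 \<and> x = pi r ! s"
proof -
  obtain r where r: "r \<in> I" "x \<in> set (pi r)" using assms Vsub by blast
  then obtain s where s: "s < length (pi r)" "x = pi r ! s" by (metis in_set_conv_nth)
  have "s \<noteq> 0"
  proof
    assume "s = 0" then show False using s assms(2) hd_S[OF r(1)] hd_nth[OF r(1)] by simp
  qed
  moreover have "s \<noteq> length (pi r) - 1" using s assms(3) last_T[OF r(1)] last_nth[OF r(1)] by auto
  ultimately show ?thesis using r s by (intro bexI[of _ r] exI[of _ s]) auto
qed

lemma cross_path:
  assumes "E x y" "x \<in> Sv" "y \<notin> Sv"
  shows "\<exists>r\<in>I. x = pi r ! 0 \<and> y = pi r ! 1"
proof -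
  have "\<not> (x \<in> Tv)" using assms(2) ST by blast
  then obtain r where r: "r \<in> I" "path_edge (pi r) x y" using Ecases[OF assms(1)] assms by blast
  have xm: "x \<in> set (pi r)" using path_edge_mem[OF r(2)] by simp
  have x0: "x = pi r ! 0" using S_hd[OF r(1) assms(2) xm] hd_nth[OF r(1)] by simp
  have d: "distinct (pi r)" using pdist r by auto
  have "3 \<le> length (pi r)" using plen[OF r(1)] by simp
  then have l: "0 < length (pi r)" by linarith
  obtain t where t: "Suc t < length (pi r)"
    "(x = pi r ! t \<and> y = pi r ! Suc t) \<or> (x = pi r ! Suc t \<and> y = pi r ! t)"
    using r(2) unfolding path_edge_def by blast
  from t(2) show ?thesis
  proof
    assume a: "x = pi r ! t \<and> y = pi r ! Suc t"
    then have "t = 0" using x0 nth_eq_iff_index_eq[OF d, of t 0] t(1) l by auto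
    then show ?thesis using a x0 r by auto
  next
    assume a: "x = pi r ! Suc t \<and> y = pi r ! t"
    then have "Suc t = 0" using x0 nth_eq_iff_index_eq[OF d, of "Suc t" 0] t(1) l by auto
    then show ?thesis by simp
  qed
qed

lemma nopc_hole_contra:
  assumes "nopc X E" "distinct xs" "length xs \<ge> 4"
    "\<forall>i<length xs. \<forall>j<length xs. E (xs ! i) (xs ! j) \<longleftrightarrow> (j = Suc i mod length xs \<or> i = Suc j mod length xs)"
    "\<forall>t<length xs. xs ! t \<in> X"
  shows False
proof -
  let ?n = "length xs"
  have ne: "xs \<noteq> []" using assms(3) by (cases xs) auto
  have l4: "0 < ?n" "1 < ?n" "2 < ?n" "3 < ?n" using assms(3) by linarith+
  have m: "Suc 0 mod ?n = 1" "Suc 1 mod ?n = 2" "Suc 2 mod ?n = 3" using assms(3) by auto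
  have m4: "Suc 3 mod ?n = (if ?n = 4 then 0 else 4)" using assms(3) by auto
  have e01: "E (xs!0) (xs!1)" using assms(4)[rule_format, of 0 1] assms(3) l4 m by simp
  have e12: "E (xs!1) (xs!2)" using assms(4)[rule_format, of 1 2] assms(3) l4 m by simp
  have e23: "E (xs!2) (xs!3)" using assms(4)[rule_format, of 2 3] assms(3) l4 m by simp
  have n02: "\<not> E (xs!0) (xs!2)" using assms(4)[rule_format, of 0 2] assms(3) l4 m by simp
  have n13: "\<not> E (xs!1) (xs!3)" using assms(4)[rule_format, of 1 3] assms(3) l4 m m4 by simp
  have e30: "E (xs!3) (xs!0) \<longleftrightarrow> ?n = 4" using assms(4)[rule_format, of 3 0] assms(3) l4 m m4 by auto
  have e03: "E (xs!0) (xs!3) \<longleftrightarrow> ?n = 4" using assms(4)[rule_format, of 0 3] assms(3) l4 m m4 by auto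
  have dist: "distinct [xs!0, xs!1, xs!2, xs!3]" using assms(2) l4 by (auto simp: nth_eq_iff_index_eq)
  have inX: "xs!0 \<in> X" "xs!1 \<in> X" "xs!2 \<in> X" "xs!3 \<in> X" using assms(5) l4 by auto
  show False
  proof (cases "?n = 4")
    case True
    then show False using assms(1) unfolding nopc_def using dist inX e01 e12 e23 n02 n13 e30 by blast
  next
    case False
    then show False using assms(1) unfolding nopc_def using dist inX e01 e12 e23 n02 n13 e03 by blast
  qed
qed

end


lemma mod_cycle2: "(t0::nat) < n \<Longrightarrow> t1 < n \<Longrightarrow> n \<ge> 3 \<Longrightarrow> Suc t0 mod n = t1 \<Longrightarrow> Suc t1 mod n = t0 \<Longrightarrow> False"
  by (auto simp: mod_if split: if_splits)

context twoside begin

lemma two_paths: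
  assumes C: "hole V E C"
  shows "\<exists>r\<in>I. \<exists>r'\<in>I. r \<noteq> r' \<and> set (pi r) \<subseteq> C \<and> set (pi r') \<subseteq> C"
proof -
  obtain xs where xs: "distinct xs" "length xs \<ge> 4" "set xs = C" "C \<subseteq> V"
    "\<forall>i<length xs. \<forall>j<length xs. E (xs ! i) (xs ! j) \<longleftrightarrow> (j = Suc i mod length xs \<or> i = Suc j mod length xs)"
    using C unfolding hole_def by blast
  let ?n = "length xs"
  have n0: "0 < ?n" using xs(2) by linarith
  define g where "g t = (xs ! (t mod ?n) \<in> Sv)" for t
  have inC: "xs ! t \<in> C" if "t < ?n" for t using that xs(3) by auto
  have cross: "\<exists>r\<in>I. set (pi r) \<subseteq> C \<and> ((xs!t = pi r!0 \<and> xs!(Suc t mod ?n) = pi r!1) \<or>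
                  (xs!t = pi r!1 \<and> xs!(Suc t mod ?n) = pi r!0))"
    if t: "t < ?n" "g t \<noteq> g (Suc t)" for t
  proof -
    let ?x = "xs ! t" and ?y = "xs ! (Suc t mod ?n)"
    have sl: "Suc t mod ?n < ?n" using n0 by simp
    have e: "E ?x ?y" using xs(5)[rule_format, OF t(1) sl] by simp
    have gx: "g t = (?x \<in> Sv)" using t(1) by (simp add: g_def)
    have gy: "g (Suc t) = (?y \<in> Sv)" by (simp add: g_def)
    have "\<exists>r\<in>I. (?x = pi r!0 \<and> ?y = pi r!1) \<or> (?x = pi r!1 \<and> ?y = pi r!0)"
    proof (cases "?x \<in> Sv")
      case True
      then have "?y \<notin> Sv" using t(2) gx gy by simp
      then show ?thesis using cross_path[OF e True] by blast
    next
      case False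
      then have "?y \<in> Sv" using t(2) gx gy by simp
      then show ?thesis using cross_path[OF Esym[OF e] _ False] by blast
    qed
    then obtain r where r: "r \<in> I" "(?x = pi r!0 \<and> ?y = pi r!1) \<or> (?x = pi r!1 \<and> ?y = pi r!0)" by blast
    have "pi r ! 1 \<in> C" using r(2) inC[OF t(1)] inC[OF sl] by auto
    moreover have "0 < (1::nat)" "1 < length (pi r) - 1" using plen[OF r(1)] by auto
    ultimately have "set (pi r) \<subseteq> C" using hole_interior[OF C r(1), of 1] by simp
    then show ?thesis using r by blast
  qed
  show ?thesis
  proof (cases "\<exists>t0<?n. g t0 \<noteq> g (Suc t0)")
    case True
    then obtain t0 where t0: "t0 < ?n" "g t0 \<noteq> g (Suc t0)" by blast
    have "g ?n = g 0" by (simp add: g_def)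
    then obtain t1 where t1: "t1 < ?n" "t1 \<noteq> t0" "g t1 \<noteq> g (Suc t1)" using cyc_two[OF _ t0] by blast
    obtain r0 where r0: "r0 \<in> I" "set (pi r0) \<subseteq> C" "(xs!t0 = pi r0!0 \<and> xs!(Suc t0 mod ?n) = pi r0!1) \<or>
                  (xs!t0 = pi r0!1 \<and> xs!(Suc t0 mod ?n) = pi r0!0)" using cross[OF t0] by blast
    obtain r1 where r1: "r1 \<in> I" "set (pi r1) \<subseteq> C" "(xs!t1 = pi r1!0 \<and> xs!(Suc t1 mod ?n) = pi r1!1) \<or>
                  (xs!t1 = pi r1!1 \<and> xs!(Suc t1 mod ?n) = pi r1!0)" using cross[OF t1(1,3)] by blast
    have "r0 \<noteq> r1"
    proof
      assume eq: "r0 = r1"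
      have neq: "xs ! t0 \<noteq> xs ! t1" using t0(1) t1(1,2) xs(1) by (simp add: nth_eq_iff_index_eq)
      have "xs ! (Suc t0 mod ?n) = xs ! t1 \<and> xs ! (Suc t1 mod ?n) = xs ! t0"
        using r0(3) r1(3) unfolding eq apply (elim disjE conjE) using neq by simp_all
      moreover have "Suc t0 mod ?n < ?n" "Suc t1 mod ?n < ?n" using n0 by auto
      ultimately have "Suc t0 mod ?n = t1" "Suc t1 mod ?n = t0"
        using t0(1) t1(1) xs(1) by (simp_all add: nth_eq_iff_index_eq)
      then show False using mod_cycle2[OF t0(1) t1(1)] xs(2) by simp
    qed
    then show ?thesis using r0 r1 by blast
  next
    case False
    then have step: "g t = g (Suc t)" if "t < ?n" for t using that by blast
    have all: "g t = g 0" if "t < ?n" for t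
      using that
    proof (induction t)
      case 0 then show ?case by simp
    next
      case (Suc t) then show ?case using step[of t] by simp
    qed
    show ?thesis
    proof (cases "g 0")
      case True
      then have "\<forall>t<?n. xs ! t \<in> Sv" using all by (simp add: g_def)
      then show ?thesis using nopc_hole_contra[OF Sfree xs(1,2,5)] by blast
    next
      case False
      then have nS: "\<forall>t<?n. xs ! t \<notin> Sv" using all by (simp add: g_def)
      show ?thesis
      proof (cases "\<forall>t<?n. xs ! t \<in> Tv")
        case True
        then show ?thesis using nopc_hole_contra[OF Tfree xs(1,2,5)] by blast
      next
        case False
        then obtain t where t: "t < ?n" "xs ! t \<notin> Tv" by blast
        have "xs ! t \<in> V" using inC[OF t(1)] xs(4) by auto
        then obtain r s where rs: "r \<in> I" "0 < s" "s < length (pi r) - 1" "xs ! t = pi r ! s"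
          using V_interior t(2) nS t(1) by blast
        then have "set (pi r) \<subseteq> C" using hole_interior[OF C rs(1,2,3)] inC[OF t(1)] by simp
        then have "hd (pi r) \<in> C" using hd_mem[OF rs(1)] by blast
        then obtain t' where "t' < ?n" "xs ! t' = hd (pi r)" using xs(3) by (metis in_set_conv_nth)
        then show ?thesis using nS hd_S[OF rs(1)] by auto
      qed
    qed
  qed
qed

lemma close_path:
  assumes "hole V E X" "hole V E Y" "r \<in> I" "set (pi r) \<subseteq> X" "set (pi r) \<subseteq> Y"
    "v \<in> X" "v \<in> Y" "v \<notin> set (pi r)"
  shows "holes_close X Y"
proof -
  have "card (insert v (set (pi r))) = Suc (length (pi r))"
    using assms(8) distinct_card[OF pdist[OF assms(3)]] by simp
  then have "card (insert v (set (pi r))) \<ge> 4" using plen[OF assms(3)] by simp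
  then show ?thesis using close_sub[OF assms(1), of "insert v (set (pi r))"] assms by auto
qed

lemma close_two:
  assumes "hole V E X" "hole V E Y" "r \<in> I" "r' \<in> I" "r \<noteq> r'"
    "set (pi r) \<subseteq> X" "set (pi r) \<subseteq> Y" "set (pi r') \<subseteq> X" "set (pi r') \<subseteq> Y"
  shows "holes_close X Y"
proof -
  have "hd (pi r') \<notin> set (pi r)" using pdisj[OF assms(3,4,5)] hd_mem[OF assms(4)] by blast
  then show ?thesis using close_path[OF assms(1,2,3,6,7)] hd_mem[OF assms(4)] assms(8,9) by blast
qed

end


lemma len_le1: "length xs \<le> 1 \<Longrightarrow> xs = [] \<or> (\<exists>y. xs = [y])"
  by (cases xs) auto

context twoside begin

lemma hd_ne_last: "r \<in> I \<Longrightarrow> hd (pi r) \<noteq> last (pi r)"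
proof -
  assume r: "r \<in> I"
  have l: "3 \<le> length (pi r)" using plen[OF r] by simp
  have "pi r ! 0 \<noteq> pi r ! (length (pi r) - 1)"
    using nth_eq_iff_index_eq[OF pdist[OF r], of 0 "length (pi r) - 1"] l by (cases "pi r") auto
  then show ?thesis using hd_nth[OF r] last_nth[OF r] by simp
qed

lemma build_hole:
  assumes r: "r \<in> I" "r' \<in> I" "r \<noteq> r'"
    and ms: "length ms \<le> 1" "set ms \<subseteq> Sv" "set ms \<inter> set (pi r) = {}" "set ms \<inter> set (pi r') = {}" "set ms \<subseteq> V"
    and mt: "length mt \<le> 1" "set mt \<subseteq> Tv" "set mt \<inter> set (pi r) = {}" "set mt \<inter> set (pi r') = {}" "set mt \<subseteq> V"
    and noE: "\<And>y y'. y \<in> set mt \<Longrightarrow> y' \<in> set ms \<Longrightarrow> \<not> E y y'"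
    and S0: "ms = [] \<Longrightarrow> E (hd (pi r)) (hd (pi r'))"
    and S1: "\<And>y. ms = [y] \<Longrightarrow> E (hd (pi r)) y \<and> E y (hd (pi r')) \<and> \<not> E (hd (pi r)) (hd (pi r'))"
    and T0: "mt = [] \<Longrightarrow> E (last (pi r)) (last (pi r'))"
    and T1: "\<And>y. mt = [y] \<Longrightarrow> E (last (pi r)) y \<and> E y (last (pi r')) \<and> \<not> E (last (pi r)) (last (pi r'))"
  shows "hole V E (set (pi r) \<union> set (pi r') \<union> set ms \<union> set mt)"
proof -
  let ?p = "pi r" and ?q = "pi r'"
  define tp where "tp = tl ?p"
  define x0 where "x0 = hd ?p"
  have dp: "distinct ?p" and dq: "distinct ?q" using pdist r by auto
  have lp: "3 \<le> length ?p" and lq: "3 \<le> length ?q" using plen r by auto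
  have disj: "set ?p \<inter> set ?q = {}" using pdisj r by auto
  have pne: "?p \<noteq> []" using lp by (cases ?p) auto
  have qne: "?q \<noteq> []" using lq by (cases ?q) auto
  have pcons: "?p = x0 # tp" using pne by (simp add: x0_def tp_def)
  have tpne: "tp \<noteq> []" using lp pcons by (cases tp) auto
  have hdtp: "hd tp = ?p ! 1" using pcons tpne by (simp add: hd_conv_nth)
  have lasttp: "last tp = last ?p" using pcons tpne by simp
  have x0tp: "x0 \<notin> set tp" using dp pcons by simp
  have setp: "set ?p = insert x0 (set tp)" using pcons by simp
  have tpsub: "set tp \<subseteq> set ?p" using setp by blast
  have x0S: "x0 \<in> Sv" using hd_S[OF r(1)] by (simp add: x0_def)
  have x0p: "x0 \<in> set ?p" using setp by simp
  have tpS: "y \<notin> Sv" if "y \<in> set tp" for y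
  proof
    assume "y \<in> Sv"
    then have "y = x0" using S_hd[OF r(1)] that tpsub by (auto simp: x0_def)
    then show False using that x0tp by simp
  qed
  have msc: "ms = [] \<or> (\<exists>y. ms = [y])" using len_le1[OF ms(1)] .
  have mtc: "mt = [] \<or> (\<exists>y. mt = [y])" using len_le1[OF mt(1)] .
  have msT: "y \<notin> Tv" if "y \<in> set ms" for y using that ms(2) ST by blast
  have mtS: "y \<notin> Sv" if "y \<in> set mt" for y using that mt(2) ST by blast
  define Y1 where "Y1 = tp @ mt"
  define Y2 where "Y2 = Y1 @ rev ?q"
  define Y3 where "Y3 = Y2 @ ms"
  have ip_tp: "ipath E tp" unfolding tp_def by (rule ipath_tl[OF ipath_pi[OF r(1)]])
  have ip_mt: "ipath E mt" using ipath_short[OF mt(1)] Eirr by blast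
  have ip_ms: "ipath E ms" using ipath_short[OF ms(1)] Eirr by blast
  have ip_q: "ipath E (rev ?q)" using ipath_rev[OF Esym ipath_pi[OF r(2)]] .
  have lastY1: "last Y1 = (if mt = [] then last ?p else hd mt)"
    using mtc tpne lasttp by (auto simp: Y1_def)
  have Y1ne: "Y1 \<noteq> []" using tpne by (simp add: Y1_def)
  have ip1: "ipath E Y1" unfolding Y1_def
  proof (rule ipath_append[OF Esym ip_tp ip_mt])
    show "set tp \<inter> set mt = {}" using mt(3) tpsub by blast
    show "E (last tp) (hd mt)" if "tp \<noteq> []" "mt \<noteq> []" using that mtc T1 lasttp by auto
    fix x y assume xy: "x \<in> set tp" "y \<in> set mt" "E x y"
    have "y \<notin> set ?p" using xy(2) mt(3) by blast
    then have "(x = hd ?p \<and> y \<in> Sv) \<or> (x = last ?p \<and> y \<in> Tv)"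
      using exit_lemma[OF r(1) _ _ xy(3)] xy(1) tpsub by blast
    then have "x = last tp" using mtS[OF xy(2)] lasttp by auto
    moreover have "y = hd mt" using mtc xy(2) by auto
    ultimately show "x = last tp \<and> y = hd mt" by simp
  qed
  have ip2: "ipath E Y2" unfolding Y2_def
  proof (rule ipath_append[OF Esym ip1 ip_q])
    show "set Y1 \<inter> set (rev ?q) = {}" using mt(4) disj tpsub by (auto simp: Y1_def)
    show "E (last Y1) (hd (rev ?q))"
      using lastY1 mtc T0 T1 qne by (auto simp: hd_rev)
    fix x w assume xw: "x \<in> set Y1" "w \<in> set (rev ?q)" "E x w"
    have wq: "w \<in> set ?q" using xw(2) by simp
    have xq: "x \<notin> set ?q" using xw(1) mt(4) disj tpsub by (auto simp: Y1_def)
    have xS: "x \<notin> Sv" using xw(1) tpS mtS by (auto simp: Y1_def)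
    have "(w = hd ?q \<and> x \<in> Sv) \<or> (w = last ?q \<and> x \<in> Tv)"
      using exit_lemma[OF r(2) wq xq Esym[OF xw(3)]] .
    then have w: "w = last ?q" and xT: "x \<in> Tv" using xS by auto
    have "x = last Y1"
    proof (cases "x \<in> set tp")
      case True
      then have xl: "x = last ?p" using T_last[OF r(1) xT] tpsub by blast
      show ?thesis
      proof (cases "mt = []")
        case True then show ?thesis using lastY1 xl by simp
      next
        case False
        then obtain y where "mt = [y]" using mtc by blast
        then show ?thesis using T1 xw(3) xl w by blast
      qed
    next
      case False
      then have "x \<in> set mt" using xw(1) by (simp add: Y1_def)
      then show ?thesis using mtc lastY1 by auto
    qed
    then show "x = last Y1 \<and> w = hd (rev ?q)" using w qne by (simp add: hd_rev)
  qed
  have lastY2: "last Y2 = hd ?q" using qne by (simp add: Y2_def last_rev)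
  have ip3: "ipath E Y3" unfolding Y3_def
  proof (rule ipath_append[OF Esym ip2 ip_ms])
    show "set Y2 \<inter> set ms = {}" using ms(3,4) mt(2) ms(2) ST tpsub by (auto simp: Y2_def Y1_def)
    show "E (last Y2) (hd ms)" if "Y2 \<noteq> []" "ms \<noteq> []" using that msc S1 lastY2 Esym by auto
    fix x y assume xy: "x \<in> set Y2" "y \<in> set ms" "E x y"
    have yT: "y \<notin> Tv" using msT[OF xy(2)] .
    have "x = last Y2"
    proof -
      have "x \<in> set tp \<or> x \<in> set mt \<or> x \<in> set ?q" using xy(1) by (auto simp: Y2_def Y1_def)
      moreover have "x \<notin> set tp"
      proof
        assume xt: "x \<in> set tp"
        have "y \<notin> set ?p" using xy(2) ms(3) by blast
        then have "(x = hd ?p \<and> y \<in> Sv) \<or> (x = last ?p \<and> y \<in> Tv)"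
          using exit_lemma[OF r(1) _ _ xy(3)] xt tpsub by blast
        then show False using yT xt x0tp by (auto simp: x0_def)
      qed
      moreover have "x \<notin> set mt" using noE xy(2,3) by blast
      ultimately have xq: "x \<in> set ?q" by blast
      have "y \<notin> set ?q" using xy(2) ms(4) by blast
      then have "(x = hd ?q \<and> y \<in> Sv) \<or> (x = last ?q \<and> y \<in> Tv)"
        using exit_lemma[OF r(2) xq _ xy(3)] by blast
      then show ?thesis using yT lastY2 by auto
    qed
    moreover have "y = hd ms" using msc xy(2) by auto
    ultimately show "x = last Y2 \<and> y = hd ms" by simp
  qed
  have lastY3: "last Y3 = (if ms = [] then hd ?q else hd ms)"
    using msc lastY2 by (auto simp: Y3_def)
  have hdY3: "hd Y3 = ?p ! 1" using tpne hdtp by (simp add: Y3_def Y2_def Y1_def)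
  have setY3: "set Y3 = set tp \<union> set mt \<union> set ?q \<union> set ms" by (auto simp: Y3_def Y2_def Y1_def)
  have nin: "x0 \<notin> set Y3"
    using x0tp x0p mt(3) ms(3) disj unfolding setY3 by blast
  have lenY3: "length Y3 \<ge> 3" using lq by (simp add: Y3_def Y2_def Y1_def)
  have h: "E x0 (hd Y3)"
  proof -
    have "0 < length ?p" "1 < length ?p" using lp by linarith+
    then have "E (?p ! 0) (?p ! 1)" using ipath_E[OF ipath_pi[OF r(1)], of 0 1] by simp
    then show ?thesis using hdY3 hd_nth[OF r(1)] by (simp add: x0_def)
  qed
  have l: "E x0 (last Y3)"
  proof (cases "ms = []")
    case True then show ?thesis using S0 lastY3 by (simp add: x0_def)
  next
    case False
    then obtain y where "ms = [y]" using msc by blast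
    then show ?thesis using S1 lastY3 by (simp add: x0_def)
  qed
  have only: "y = hd Y3 \<or> y = last Y3" if y: "y \<in> set Y3" "E x0 y" for y
  proof (cases "y \<in> set tp")
    case True
    then have "y \<in> set ?p" using tpsub by blast
    then obtain j where j: "j < length ?p" "y = ?p ! j" by (metis in_set_conv_nth)
    have "E (?p ! 0) (?p ! j)" using y(2) j hd_nth[OF r(1)] by (simp add: x0_def)
    moreover have "0 < length ?p" using lp by linarith
    ultimately have "j = 1" using ipath_E[OF ipath_pi[OF r(1)], of 0 j] j(1) by simp
    then show ?thesis using j hdY3 by simp
  next
    case False
    have ynp: "y \<notin> set ?p" using False y(1) mt(3) ms(3) disj unfolding setY3 setp by blast
    have "(x0 = hd ?p \<and> y \<in> Sv) \<or> (x0 = last ?p \<and> y \<in> Tv)"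
      using exit_lemma[OF r(1) x0p ynp y(2)] .
    then have yS: "y \<in> Sv" using hd_ne_last[OF r(1)] by (auto simp: x0_def)
    have "y \<in> set ?q \<or> y \<in> set ms" using y(1) False mtS yS unfolding setY3 by blast
    then show ?thesis
    proof
      assume yq: "y \<in> set ?q"
      then have yh: "y = hd ?q" using S_hd[OF r(2) yS] by simp
      show ?thesis
      proof (cases "ms = []")
        case True then show ?thesis using lastY3 yh by simp
      next
        case False
        then obtain y' where "ms = [y']" using msc by blast
        then show ?thesis using S1 y(2) yh by (simp add: x0_def)
      qed
    next
      assume "y \<in> set ms"
      then show ?thesis using msc lastY3 by auto
    qed
  qed
  have Vs: "insert x0 (set Y3) \<subseteq> V"
    using pV[OF r(1)] pV[OF r(2)] ms(5) mt(5) x0p tpsub unfolding setY3 by blast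
  have "hole V E (insert x0 (set Y3))"
    using hole_close[OF Esym Eirr ip3 nin lenY3 h l only Vs] by blast
  moreover have "insert x0 (set Y3) = set ?p \<union> set ?q \<union> set ms \<union> set mt"
    unfolding setY3 setp by blast
  ultimately show ?thesis by simp
qed

end


lemma odd_core:
  fixes k L :: nat and a b :: "nat \<Rightarrow> 'a" and P :: "nat \<Rightarrow> 'a list" and EA :: "nat \<Rightarrow> nat \<Rightarrow> bool"
    and z :: 'a and V :: "'a set" and E :: "'a \<Rightarrow> 'a \<Rightarrow> bool"
  defines "Av \<equiv> a ` {..<k}" and "Bv \<equiv> b ` {..<k}"
    and "AE \<equiv> \<lambda>x y. \<exists>i<k. \<exists>j<k. i \<noteq> j \<and> x = a i \<and> y = a j \<and> EA i j"
    and "BE \<equiv> \<lambda>x y. \<exists>i<k. \<exists>j<k. i \<noteq> j \<and> x = b i \<and> y = b j \<and> \<not> EA i j"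
    and "W \<equiv> \<Union>i<k. set (P i)"
  assumes k3: "3 \<le> k" and L2: "2 \<le> L"
    and ia: "inj_on a {..<k}" and ib: "inj_on b {..<k}"
    and ab: "\<forall>i<k. \<forall>j<k. a i \<noteq> b j"
    and Pp: "\<forall>i<k. is_path (P i) L (a i) (b i)"
    and Pd: "\<forall>i<k. \<forall>j<k. i \<noteq> j \<longrightarrow> set (P i) \<inter> set (P j) = {}"
    and EAs: "\<forall>i j. EA i j = EA j i"
    and thA: "threshold_graph Av AE" and thB: "threshold_graph Bv BE"
    and ncA: "\<not> connected_graph Av AE"
    and zW: "z \<notin> W" and Vd: "V = insert z W"
    and Edef: "\<forall>x y. E x y \<longleftrightarrow> (\<exists>i<k. path_edge (P i) x y) \<or> AE x y \<or> BE x y \<or>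
                 (x = z \<and> y \<in> Av) \<or> (y = z \<and> x \<in> Av)"
    and C: "hole V E C" and C': "hole V E C'"
  shows "holes_equivalent V E C C'"
proof -
  have dP: "distinct (P i)" and lP: "length (P i) = Suc L" and hP: "hd (P i) = a i" and tP: "last (P i) = b i"
    if "i < k" for i using Pp that unfolding is_path_def by auto
  have aP: "a i \<in> set (P i)" if "i < k" for i
  proof -
    have "P i \<noteq> []" using lP[OF that] by auto
    then show ?thesis using hP[OF that] by (metis hd_in_set)
  qed
  have bP: "b i \<in> set (P i)" if "i < k" for i
  proof -
    have "P i \<noteq> []" using lP[OF that] by auto
    then show ?thesis using tP[OF that] by (metis last_in_set)
  qed
  have aPj: "a j \<in> set (P i) \<longleftrightarrow> j = i" if "i < k" "j < k" for i j
    using Pd aP bP that by blast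
  have bPj: "b j \<in> set (P i) \<longleftrightarrow> j = i" if "i < k" "j < k" for i j
    using Pd aP bP that by blast
  have AvW: "Av \<subseteq> W" and BvW: "Bv \<subseteq> W" using aP bP by (auto simp: Av_def Bv_def W_def)
  have zA: "z \<notin> Av" and zB: "z \<notin> Bv" using AvW BvW zW by auto
  have AB: "Av \<inter> Bv = {}" using ab by (auto simp: Av_def Bv_def)
  have ainj: "a i = a j \<longleftrightarrow> i = j" if "i < k" "j < k" for i j using ia that by (auto simp: inj_on_def)
  have binj: "b i = b j \<longleftrightarrow> i = j" if "i < k" "j < k" for i j using ib that by (auto simp: inj_on_def)
  have AEsym: "AE x y \<Longrightarrow> AE y x" for x y unfolding AE_def using EAs by blast
  have BEsym: "BE x y \<Longrightarrow> BE y x" for x y unfolding BE_def using EAs by blast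
  have AEirr: "\<not> AE x x" for x unfolding AE_def using ainj by blast
  have BEirr: "\<not> BE x x" for x unfolding BE_def using binj by blast
  have AEin: "AE x y \<Longrightarrow> x \<in> Av \<and> y \<in> Av" for x y unfolding AE_def Av_def by blast
  have BEin: "BE x y \<Longrightarrow> x \<in> Bv \<and> y \<in> Bv" for x y unfolding BE_def Bv_def by blast
  have Ea: "E (a i) (a j) \<longleftrightarrow> EA i j" if "i < k" "j < k" "i \<noteq> j" for i j
  proof
    assume "E (a i) (a j)"
    then have "(\<exists>r<k. path_edge (P r) (a i) (a j)) \<or> AE (a i) (a j) \<or> BE (a i) (a j) \<or>
                 (a i = z \<and> a j \<in> Av) \<or> (a j = z \<and> a i \<in> Av)" using Edef by blast
    moreover have "\<not> (\<exists>r<k. path_edge (P r) (a i) (a j))"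
    proof
      assume "\<exists>r<k. path_edge (P r) (a i) (a j)"
      then obtain r where "r < k" "path_edge (P r) (a i) (a j)" by blast
      then have "a i \<in> set (P r)" "a j \<in> set (P r)" using path_edge_mem by metis+
      then show False using aPj \<open>r < k\<close> that by auto
    qed
    moreover have "\<not> BE (a i) (a j)" using BEin AB that by (auto simp: Av_def)
    moreover have "a i \<noteq> z" "a j \<noteq> z" using zA that by (auto simp: Av_def)
    ultimately have "AE (a i) (a j)" by blast
    then show "EA i j" unfolding AE_def using ainj that by auto
  next
    assume "EA i j"
    then have "AE (a i) (a j)" unfolding AE_def using that by blast
    then show "E (a i) (a j)" using Edef by blast
  qed
  have Eb: "E (b i) (b j) \<longleftrightarrow> \<not> EA i j" if "i < k" "j < k" "i \<noteq> j" for i j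
  proof
    assume "E (b i) (b j)"
    then have "(\<exists>r<k. path_edge (P r) (b i) (b j)) \<or> AE (b i) (b j) \<or> BE (b i) (b j) \<or>
                 (b i = z \<and> b j \<in> Av) \<or> (b j = z \<and> b i \<in> Av)" using Edef by blast
    moreover have "\<not> (\<exists>r<k. path_edge (P r) (b i) (b j))"
    proof
      assume "\<exists>r<k. path_edge (P r) (b i) (b j)"
      then obtain r where "r < k" "path_edge (P r) (b i) (b j)" by blast
      then have "b i \<in> set (P r)" "b j \<in> set (P r)" using path_edge_mem by metis+
      then show False using bPj \<open>r < k\<close> that by auto
    qed
    moreover have "\<not> AE (b i) (b j)" using AEin AB that by (auto simp: Bv_def)
    moreover have "b i \<noteq> z" "b j \<noteq> z" using zB that by (auto simp: Bv_def)
    ultimately have "BE (b i) (b j)" by blast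
    then show "\<not> EA i j" unfolding BE_def using binj that by auto
  next
    assume "\<not> EA i j"
    then have "BE (b i) (b j)" unfolding BE_def using that by blast
    then show "E (b i) (b j)" using Edef by blast
  qed
  have Eza: "E (a i) z" "E z (a i)" if "i < k" for i using Edef that by (auto simp: Av_def)
  have ts: "twoside V E {..<k} P (insert z Av) Bv"
  proof
    show "E y x" if "E x y" for x y
      using that Edef path_edge_sym AEsym BEsym by metis
    show "\<not> E x x" for x
      using Edef path_edge_irr dP AEirr BEirr zA by fastforce
    show "distinct (P r)" if "r \<in> {..<k}" for r using dP that by simp
    show "3 \<le> length (P r)" if "r \<in> {..<k}" for r using lP that L2 by simp
    show "set (P r) \<inter> set (P r') = {}" if "r \<in> {..<k}" "r' \<in> {..<k}" "r \<noteq> r'" for r r'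
      using Pd that by simp
    show "insert z Av \<inter> Bv = {}" using AB zB by blast
    show "insert z Av \<inter> set (P r) = {hd (P r)}" if "r \<in> {..<k}" for r
    proof -
      have "z \<notin> set (P r)" using zW that by (auto simp: W_def)
      moreover have "Av \<inter> set (P r) = {a r}" using aPj that by (auto simp: Av_def)
      ultimately show ?thesis using hP that by auto
    qed
    show "Bv \<inter> set (P r) = {last (P r)}" if "r \<in> {..<k}" for r
      using bPj tP that by (auto simp: Bv_def)
    show "V \<subseteq> insert z Av \<union> Bv \<union> (\<Union>r\<in>{..<k}. set (P r))" using Vd by (auto simp: W_def)
    show "set (P r) \<subseteq> V" if "r \<in> {..<k}" for r using Vd that by (auto simp: W_def)
    show "E x y" if "r \<in> {..<k}" "path_edge (P r) x y" for r x y using Edef that by auto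
    show "(\<exists>r\<in>{..<k}. path_edge (P r) x y) \<or> (x \<in> insert z Av \<and> y \<in> insert z Av) \<or> (x \<in> Bv \<and> y \<in> Bv)"
      if "E x y" for x y
      using that Edef AEin BEin by auto
    have EA_AE: "E x y \<longleftrightarrow> AE x y" if xy: "x \<in> Av" "y \<in> Av" for x y
    proof -
      obtain i j where ij: "i < k" "j < k" "x = a i" "y = a j" using xy by (auto simp: Av_def)
      show ?thesis
      proof (cases "i = j")
        case True
        have "\<not> E x x" using Edef path_edge_irr dP AEirr BEirr zA by fastforce
        then show ?thesis using True ij AEirr by simp
      next
        case False
        then show ?thesis using Ea[OF ij(1,2) False] ij unfolding AE_def using ainj by auto
      qed
    qed
    have EB_BE: "E x y \<longleftrightarrow> BE x y" if xy: "x \<in> Bv" "y \<in> Bv" for x y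
    proof -
      obtain i j where ij: "i < k" "j < k" "x = b i" "y = b j" using xy by (auto simp: Bv_def)
      show ?thesis
      proof (cases "i = j")
        case True
        have "\<not> E x x" using Edef path_edge_irr dP AEirr BEirr zA by fastforce
        then show ?thesis using True ij BEirr by simp
      next
        case False
        then show ?thesis using Eb[OF ij(1,2) False] ij unfolding BE_def using binj by auto
      qed
    qed
    show "nopc (insert z Av) E"
    proof (rule nopc_dom)
      show "nopc Av E" using nopc_cong[OF threshold_nopc[OF thA]] EA_AE by blast
      show "E z x \<and> E x z" if "x \<in> Av" "x \<noteq> z" for x using that Edef by auto
    qed
    show "nopc Bv E" using nopc_cong[OF threshold_nopc[OF thB]] EB_BE by blast
  qed
  interpret T: twoside V E "{..<k}" P "insert z Av" Bv by (rule ts)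
  have "\<exists>d<k. \<forall>j<k. j \<noteq> d \<longrightarrow> \<not> EA d j"
  proof (rule ccontr)
    assume H: "\<not> (\<exists>d<k. \<forall>j<k. j \<noteq> d \<longrightarrow> \<not> EA d j)"
    then have nb: "\<forall>i<k. \<exists>j<k. j \<noteq> i \<and> EA i j" by blast
    define Rel where "Rel = (\<lambda>u v. u \<in> Av \<and> v \<in> Av \<and> AE u v)"
    have "a 0 \<in> Av" using k3 by (auto simp: Av_def)
    then have Av_ne: "Av \<noteq> {}" by blast
    from ncA obtain x y where xy: "x \<in> Av" "y \<in> Av" "\<not> Rel\<^sup>*\<^sup>* x y"
      unfolding connected_graph_def Rel_def using Av_ne by blast
    have Rsym: "Rel u v \<Longrightarrow> Rel v u" for u v using AEsym by (auto simp: Rel_def)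
    have R2: "Rel\<^sup>*\<^sup>* u w" if "Rel u v" "Rel v w" for u v w
      using that by (meson r_into_rtranclp rtranclp.rtrancl_into_rtrancl)
    have R3: "Rel\<^sup>*\<^sup>* u w" if "Rel u v" "Rel v v'" "Rel v' w" for u v v' w
      using R2[OF that(1,2)] that(3) by (meson rtranclp.rtrancl_into_rtrancl)
    obtain i where i: "i < k" "x = a i" using xy(1) by (auto simp: Av_def)
    obtain j where j: "j < k" "y = a j" using xy(2) by (auto simp: Av_def)
    obtain i' where i': "i' < k" "i' \<noteq> i" "EA i i'" using nb i(1) by blast
    obtain j' where j': "j' < k" "j' \<noteq> j" "EA j j'" using nb j(1) by blast
    define x' where "x' = a i'"
    define y' where "y' = a j'"
    have x'A: "x' \<in> Av" and y'A: "y' \<in> Av" using i' j' by (auto simp: Av_def x'_def y'_def)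
    have Axx: "AE x x'" unfolding AE_def x'_def using i i' by blast
    have Ayy: "AE y y'" unfolding AE_def y'_def using j j' by blast
    have Rxx: "Rel x x'" using Axx xy x'A by (simp add: Rel_def)
    have Ryy: "Rel y y'" using Ayy xy y'A by (simp add: Rel_def)
    have n1: "\<not> AE x y"
    proof
      assume "AE x y" then have "Rel x y" using xy by (simp add: Rel_def)
      then show False using xy(3) by (meson r_into_rtranclp)
    qed
    have n2: "\<not> AE x y'"
    proof
      assume "AE x y'" then have "Rel x y'" using xy y'A by (simp add: Rel_def)
      then show False using xy(3) R2 Rsym[OF Ryy] by blast
    qed
    have n3: "\<not> AE x' y"
    proof
      assume "AE x' y" then have "Rel x' y" using xy x'A by (simp add: Rel_def)
      then show False using xy(3) R2 Rxx by blast
    qed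
    have n4: "\<not> AE x' y'"
    proof
      assume "AE x' y'" then have "Rel x' y'" using x'A y'A by (simp add: Rel_def)
      then show False using xy(3) R3 Rxx Rsym[OF Ryy] by blast
    qed
    have d1: "x \<noteq> x'" using Axx AEirr by metis
    have d2: "y \<noteq> y'" using Ayy AEirr by metis
    have d3: "x \<noteq> y" using xy(3) by auto
    have d4: "x \<noteq> y'" using xy(3) Rsym[OF Ryy] by (metis r_into_rtranclp)
    have d5: "x' \<noteq> y" using xy(3) Rxx by (metis r_into_rtranclp)
    have d6: "x' \<noteq> y'" using xy(3) Rxx Rsym[OF Ryy] R2 by metis
    have "distinct [x, x', y, y']" using d1 d2 d3 d4 d5 d6 by auto
    then show False using thA xy(1,2) x'A y'A Axx Ayy n1 n2 n3 n4 AEsym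
      unfolding threshold_graph_def by blast
  qed
  then obtain d where d: "d < k" "\<And>j. j < k \<Longrightarrow> j \<noteq> d \<Longrightarrow> \<not> EA d j" by blast
  define e :: nat where "e = (if d = 0 then 1 else 0)"
  have e: "e < k" "e \<noteq> d" using k3 by (auto simp: e_def)
  have zP: "z \<notin> set (P i)" if "i < k" for i using zW that by (auto simp: W_def)
  have bdP: "b d \<notin> set (P i)" if "i < k" "i \<noteq> d" for i using bPj[OF that(1) d(1)] that(2) by simp
  have Kh: "\<exists>K. hole V E K \<and> set (P i) \<subseteq> K \<and> set (P j) \<subseteq> K \<and> (\<not> EA i j \<longrightarrow> z \<in> K) \<and> (EA i j \<longrightarrow> b d \<in> K)"
    if ij: "i < k" "j < k" "i \<noteq> j" for i j
  proof (cases "EA i j")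
    case False
    have "hole V E (set (P i) \<union> set (P j) \<union> set [z] \<union> set [])"
    proof (rule T.build_hole)
      show "E (hd (P i)) y \<and> E y (hd (P j)) \<and> \<not> E (hd (P i)) (hd (P j))" if "[z] = [y]" for y
        using that Eza ij Ea[OF ij] False hP by auto
      show "E (last (P i)) (last (P j))" using Eb[OF ij] False tP ij by simp
    qed (use ij zP Vd in auto)
    then show ?thesis using False by auto
  next
    case True
    have idd: "i \<noteq> d" "j \<noteq> d" using d(2)[of j] d(2)[of i] True EAs ij by auto
    have "hole V E (set (P i) \<union> set (P j) \<union> set [] \<union> set [b d])"
    proof (rule T.build_hole)
      show "E (hd (P i)) (hd (P j))" using Ea[OF ij] True hP ij by simp
      show "E (last (P i)) y \<and> E y (last (P j)) \<and> \<not> E (last (P i)) (last (P j))" if "[b d] = [y]" for y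
      proof -
        have "\<not> EA i d" "\<not> EA d j" using d(2)[of i] d(2)[of j] idd ij EAs by auto
        then show ?thesis using that Eb[OF ij] Eb[OF ij(1) d(1) idd(1)] Eb[OF d(1) ij(2) idd(2)[symmetric]] True tP ij
          by auto
      qed
    qed (use ij bdP idd d(1) Vd bP in \<open>auto simp: Bv_def W_def\<close>)
    then show ?thesis using True by auto
  qed
  obtain K0 where K0: "hole V E K0" "set (P e) \<subseteq> K0" "set (P d) \<subseteq> K0" "z \<in> K0"
    using Kh[OF e(1) d(1) e(2)] d(2)[OF e(1) e(2)] EAs by blast
  have Zd: "holes_equivalent V E X K0" if X: "hole V E X" "set (P d) \<subseteq> X" "z \<in> X" for X
    using equiv_step[OF X(1) K0(1) T.close_path[OF X(1) K0(1) _ X(2) K0(3) X(3) K0(4) zP[OF d(1)]]] d(1) by simp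
  have Zi: "holes_equivalent V E X K0" if X: "hole V E X" "i < k" "set (P i) \<subseteq> X" "z \<in> X" for X i
  proof (cases "i = d")
    case True then show ?thesis using Zd X by simp
  next
    case False
    obtain K where K: "hole V E K" "set (P i) \<subseteq> K" "set (P d) \<subseteq> K" "z \<in> K"
      using Kh[OF X(2) d(1) False] d(2)[OF X(2) False] EAs by blast
    have "holes_equivalent V E X K"
      using equiv_step[OF X(1) K(1) T.close_path[OF X(1) K(1) _ X(3) K(2) X(4) K(4) zP[OF X(2)]]] X(2) by simp
    then show ?thesis using Zd[OF K(1,3,4)] equiv_trans by blast
  qed
  have toK0: "holes_equivalent V E X K0" if X: "hole V E X" for X
  proof -
    obtain i j where ij: "i < k" "j < k" "i \<noteq> j" "set (P i) \<subseteq> X" "set (P j) \<subseteq> X"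
      using T.two_paths[OF X] by auto
    have pairK: "holes_equivalent V E X K" if "hole V E K" "set (P i) \<subseteq> K" "set (P j) \<subseteq> K" for K
      using equiv_step[OF X that(1) T.close_two[OF X that(1) _ _ ij(3) ij(4) that(2) ij(5) that(3)]] ij by simp
    show ?thesis
    proof (cases "i = d \<or> j = d")
      case True
      obtain K where K: "hole V E K" "set (P i) \<subseteq> K" "set (P j) \<subseteq> K" "z \<in> K"
        using Kh[OF ij(1-3)] True d(2) ij EAs by blast
      have "set (P d) \<subseteq> K" using True K by auto
      then show ?thesis using pairK[OF K(1-3)] Zd[OF K(1) _ K(4)] equiv_trans by blast
    next
      case False
      obtain K where K: "hole V E K" "set (P i) \<subseteq> K" "set (P j) \<subseteq> K"
        "\<not> EA i j \<longrightarrow> z \<in> K" "EA i j \<longrightarrow> b d \<in> K"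
        using Kh[OF ij(1-3)] by blast
      have XK: "holes_equivalent V E X K" using pairK[OF K(1-3)] .
      show ?thesis
      proof (cases "EA i j")
        case False
        then show ?thesis using XK Zi[OF K(1) ij(1) K(2)] K(4) equiv_trans by blast
      next
        case True
        have id: "i \<noteq> d" using False by simp
        obtain K' where K': "hole V E K'" "set (P i) \<subseteq> K'" "set (P d) \<subseteq> K'" "z \<in> K'"
          using Kh[OF ij(1) d(1) id] d(2)[OF ij(1) id] EAs by blast
        have "b d \<in> K'" using K'(3) bP[OF d(1)] by blast
        then have "holes_equivalent V E K K'"
          using equiv_step[OF K(1) K'(1) T.close_path[OF K(1) K'(1) _ K(2) K'(2) _ _ bdP[OF ij(1) id]]] K(5) True ij(1)
          by simp
        then show ?thesis using XK Zi[OF K'(1) ij(1) K'(2,4)] equiv_trans by blast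
      qed
    qed
  qed
  show ?thesis using toK0[OF C] toK0[OF C'] equiv_sym equiv_trans by blast
qed


lemma split_nopc:
  fixes n m :: nat and a c :: "nat \<Rightarrow> 'a" and R :: "nat \<Rightarrow> nat \<Rightarrow> bool"
  defines "AE \<equiv> \<lambda>x y. (\<exists>j<m. \<exists>j'<m. j \<noteq> j' \<and> x = c j \<and> y = c j') \<or>
                     (\<exists>i<n. \<exists>j<m. R i j \<and> ((x = a i \<and> y = c j) \<or> (x = c j \<and> y = a i)))"
  assumes ia: "inj_on a {..<n}" and ic: "inj_on c {..<m}" and ac: "a ` {..<n} \<inter> c ` {..<m} = {}"
    and nm: "\<not> (\<exists>i<n. \<exists>i'<n. \<exists>j<m. \<exists>j'<m. R i j \<and> R i' j' \<and> \<not> R i j' \<and> \<not> R i' j)"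
  shows "nopc (a ` {..<n} \<union> c ` {..<m}) AE"
proof -
  let ?Cs = "c ` {..<m}" and ?As = "a ` {..<n}"
  have cinj: "c j = c j' \<longleftrightarrow> j = j'" if "j < m" "j' < m" for j j' using ic that by (auto simp: inj_on_def)
  have ainj: "a i = a i' \<longleftrightarrow> i = i'" if "i < n" "i' < n" for i i' using ia that by (auto simp: inj_on_def)
  have acne: "a i \<noteq> c j" if "i < n" "j < m" for i j using ac that by blast
  have f1: "x \<in> ?Cs \<or> y \<in> ?Cs" if "AE x y" for x y using that unfolding AE_def by blast
  have f2: "AE x y" if "x \<in> ?Cs" "y \<in> ?Cs" "x \<noteq> y" for x y using that unfolding AE_def by blast
  have f3: "AE (a i) (c j) \<longleftrightarrow> R i j" if "i < n" "j < m" for i j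
  proof
    assume "AE (a i) (c j)"
    then have "\<exists>i0<n. \<exists>j0<m. R i0 j0 \<and> a i = a i0 \<and> c j = c j0" unfolding AE_def using acne that by metis
    then show "R i j" using ainj cinj that by blast
  next
    assume "R i j" then show "AE (a i) (c j)" unfolding AE_def using that by blast
  qed
  have f3': "AE (c j) (a i) \<longleftrightarrow> R i j" if "i < n" "j < m" for i j
  proof
    assume "AE (c j) (a i)"
    then have "\<exists>i0<n. \<exists>j0<m. R i0 j0 \<and> a i = a i0 \<and> c j = c j0" unfolding AE_def using acne that by metis
    then show "R i j" using ainj cinj that by blast
  next
    assume "R i j" then show "AE (c j) (a i)" unfolding AE_def using that by blast
  qed
  have isA: "\<exists>i<n. x = a i" if "x \<in> ?As \<union> ?Cs" "x \<notin> ?Cs" for x using that by blast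
  have isC: "\<exists>j<m. x = c j" if "x \<in> ?Cs" for x using that by blast
  show ?thesis unfolding nopc_def
  proof (intro notI, elim bexE conjE disjE)
    fix p q r s assume inS: "p \<in> ?As \<union> ?Cs" "q \<in> ?As \<union> ?Cs" "r \<in> ?As \<union> ?Cs" "s \<in> ?As \<union> ?Cs"
      and dist: "distinct [p, q, r, s]"
      and e: "AE p q" "AE q r" "AE r s" "\<not> AE p r" "\<not> AE q s" "\<not> AE p s"
    have qC: "q \<in> ?Cs"
    proof (rule ccontr)
      assume "q \<notin> ?Cs"
      then have "p \<in> ?Cs" "r \<in> ?Cs" using f1 e(1,2) by blast+
      then show False using f2 e(4) dist by auto
    qed
    have rC: "r \<in> ?Cs"
    proof (rule ccontr)
      assume "r \<notin> ?Cs"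
      then have "s \<in> ?Cs" using f1 e(3) by blast
      then show False using f2 e(5) dist qC by auto
    qed
    have pA: "p \<notin> ?Cs" using f2 e(4) dist rC by auto
    have sA: "s \<notin> ?Cs" using f2 e(5) dist qC by auto
    obtain i where i: "i < n" "p = a i" using isA inS(1) pA by blast
    obtain i' where i': "i' < n" "s = a i'" using isA inS(4) sA by blast
    obtain j where j: "j < m" "q = c j" using isC qC by blast
    obtain j' where j': "j' < m" "r = c j'" using isC rC by blast
    have "R i j" using f3 e(1) i j by simp
    moreover have "R i' j'" using f3' e(3) i' j' by simp
    moreover have "\<not> R i j'" using f3 e(4) i j' by simp
    moreover have "\<not> R i' j" using f3' e(5) i' j by simp
    ultimately show False using nm i i' j j' by blast
  next
    fix p q r s assume inS: "p \<in> ?As \<union> ?Cs" "q \<in> ?As \<union> ?Cs" "r \<in> ?As \<union> ?Cs" "s \<in> ?As \<union> ?Cs"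
      and dist: "distinct [p, q, r, s]"
      and e: "AE p q" "AE q r" "AE r s" "AE s p" "\<not> AE p r" "\<not> AE q s"
    have qC: "q \<in> ?Cs"
    proof (rule ccontr)
      assume "q \<notin> ?Cs"
      then have "p \<in> ?Cs" "r \<in> ?Cs" using f1 e(1,2) by blast+
      then show False using f2 e(5) dist by auto
    qed
    have rC: "r \<in> ?Cs"
    proof (rule ccontr)
      assume "r \<notin> ?Cs"
      then have "s \<in> ?Cs" using f1 e(3) by blast
      then show False using f2 e(6) dist qC by auto
    qed
    have pA: "p \<notin> ?Cs" using f2 e(5) dist rC by auto
    have sA: "s \<notin> ?Cs" using f2 e(6) dist qC by auto
    show False using f1[OF e(4)] pA sA by blast
  qed
qed


lemma even_core:
  fixes n m L :: nat and a b c d :: "nat \<Rightarrow> 'a" and P Q :: "nat \<Rightarrow> 'a list"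
    and R :: "nat \<Rightarrow> nat \<Rightarrow> bool" and zs zt :: 'a and V :: "'a set" and E :: "'a \<Rightarrow> 'a \<Rightarrow> bool"
  defines "Av \<equiv> a ` {..<n} \<union> c ` {..<m}"
    and "AE \<equiv> \<lambda>x y. (\<exists>j<m. \<exists>j'<m. j \<noteq> j' \<and> x = c j \<and> y = c j') \<or>
                     (\<exists>i<n. \<exists>j<m. R i j \<and> ((x = a i \<and> y = c j) \<or> (x = c j \<and> y = a i)))"
    and "Bv \<equiv> b ` {..<n} \<union> d ` {..<m}"
    and "BE \<equiv> \<lambda>x y. (\<exists>j<m. \<exists>j'<m. j \<noteq> j' \<and> x = d j \<and> y = d j') \<or>
                     (\<exists>i<n. \<exists>j<m. \<not> R i j \<and> ((x = b i \<and> y = d j) \<or> (x = d j \<and> y = b i)))"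
    and "W \<equiv> (\<Union>i<n. set (P i)) \<union> (\<Union>j<m. set (Q j))"
  assumes n2: "2 \<le> n" and L2: "2 \<le> L"
    and ia: "inj_on a {..<n}" and ib: "inj_on b {..<n}" and ic: "inj_on c {..<m}" and id: "inj_on d {..<m}"
    and dab: "a ` {..<n} \<inter> b ` {..<n} = {}" and dac: "a ` {..<n} \<inter> c ` {..<m} = {}"
    and dad: "a ` {..<n} \<inter> d ` {..<m} = {}" and dbc: "b ` {..<n} \<inter> c ` {..<m} = {}"
    and dbd: "b ` {..<n} \<inter> d ` {..<m} = {}" and dcd: "c ` {..<m} \<inter> d ` {..<m} = {}"
    and Pp: "\<forall>i<n. is_path (P i) L (a i) (b i)"
    and Qp: "\<forall>j<m. is_path (Q j) (Suc L) (c j) (d j)"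
    and Pd: "\<forall>i<n. \<forall>i'<n. i \<noteq> i' \<longrightarrow> set (P i) \<inter> set (P i') = {}"
    and Qd: "\<forall>j<m. \<forall>j'<m. j \<noteq> j' \<longrightarrow> set (Q j) \<inter> set (Q j') = {}"
    and PQd: "\<forall>i<n. \<forall>j<m. set (P i) \<inter> set (Q j) = {}"
    and nm: "\<not> (\<exists>i<n. \<exists>i'<n. \<exists>j<m. \<exists>j'<m. R i j \<and> R i' j' \<and> \<not> R i j' \<and> \<not> R i' j)"
    and zs2: "zs \<noteq> zt" and zsW: "zs \<notin> W" and ztW: "zt \<notin> W" and Vd: "V = {zs, zt} \<union> W"
    and Edef: "\<forall>x y. E x y \<longleftrightarrow>
           (\<exists>i<n. path_edge (P i) x y) \<or> (\<exists>j<m. path_edge (Q j) x y) \<or> AE x y \<or> BE x y \<or>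
           (x = zs \<and> y \<in> Av) \<or> (y = zs \<and> x \<in> Av) \<or>
           (x = zt \<and> y \<in> Bv) \<or> (y = zt \<and> x \<in> Bv)"
    and C: "hole V E C" and C': "hole V E C'"
  shows "holes_equivalent V E C C'"
proof -
  define pi where "pi r = (if r < n then P r else Q (r - n))" for r
  define I where "I = {..<n+m}"
  have piP: "pi i = P i" if "i < n" for i using that by (simp add: pi_def)
  have piQ: "pi (n + j) = Q j" for j by (simp add: pi_def)
  have dpi: "distinct (pi r)" if "r \<in> I" for r
    using that Pp Qp unfolding pi_def I_def is_path_def by auto
  have lpi: "length (pi r) \<ge> 3" if "r \<in> I" for r
    using that Pp Qp L2 unfolding pi_def I_def is_path_def by auto
  have hpi: "hd (pi r) = (if r < n then a r else c (r - n))" if "r \<in> I" for r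
    using that Pp Qp unfolding pi_def I_def is_path_def by auto
  have tpi: "last (pi r) = (if r < n then b r else d (r - n))" if "r \<in> I" for r
    using that Pp Qp unfolding pi_def I_def is_path_def by auto
  have pine: "pi r \<noteq> []" if "r \<in> I" for r using lpi[OF that] by (cases "pi r") auto
  have hmem: "hd (pi r) \<in> set (pi r)" if "r \<in> I" for r using pine[OF that] by simp
  have tmem: "last (pi r) \<in> set (pi r)" if "r \<in> I" for r using pine[OF that] by simp
  have pdisj: "set (pi r) \<inter> set (pi r') = {}" if "r \<in> I" "r' \<in> I" "r \<noteq> r'" for r r'
  proof (cases "r < n")
    case True
    show ?thesis
    proof (cases "r' < n")
      case True then show ?thesis using \<open>r < n\<close> Pd that by (simp add: pi_def)
    next
      case False
      have "r' - n < m" using False that(2) by (auto simp: I_def)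
      then have "set (P r) \<inter> set (Q (r' - n)) = {}" using PQd \<open>r < n\<close> by blast
      then show ?thesis using \<open>r < n\<close> False by (auto simp: pi_def)
    qed
  next
    case False
    show ?thesis
    proof (cases "r' < n")
      case True
      have "r - n < m" using \<open>\<not> r < n\<close> that(1) by (auto simp: I_def)
      then have "set (P r') \<inter> set (Q (r - n)) = {}" using PQd True by blast
      then show ?thesis using \<open>\<not> r < n\<close> True by (auto simp: pi_def)
    next
      case False
      have "r - n \<noteq> r' - n" using \<open>\<not> r < n\<close> False that(3) by auto
      moreover have "r - n < m" "r' - n < m" using \<open>\<not> r < n\<close> False that(1,2) by (auto simp: I_def)
      ultimately have "set (Q (r - n)) \<inter> set (Q (r' - n)) = {}" using Qd by blast
      then show ?thesis using \<open>\<not> r < n\<close> False by (auto simp: pi_def)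
    qed
  qed
  have memu: "r = r'" if "r \<in> I" "r' \<in> I" "x \<in> set (pi r)" "x \<in> set (pi r')" for r r' x
    using pdisj that by blast
  have Av_eq: "Av = (\<lambda>r. hd (pi r)) ` I"
  proof
    show "Av \<subseteq> (\<lambda>r. hd (pi r)) ` I"
    proof
      fix x assume "x \<in> Av"
      then consider (A) i where "i < n" "x = a i" | (Cc) j where "j < m" "x = c j" by (auto simp: Av_def)
      then show "x \<in> (\<lambda>r. hd (pi r)) ` I"
      proof cases
        case A then show ?thesis using hpi[of i] by (auto simp: I_def intro!: image_eqI[of _ _ i])
      next
        case Cc then show ?thesis using hpi[of "n + j"] by (auto simp: I_def intro!: image_eqI[of _ _ "n + j"])
      qed
    qed
    show "(\<lambda>r. hd (pi r)) ` I \<subseteq> Av"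
      using hpi by (auto simp: Av_def I_def)
  qed
  have Bv_eq: "Bv = (\<lambda>r. last (pi r)) ` I"
  proof
    show "Bv \<subseteq> (\<lambda>r. last (pi r)) ` I"
    proof
      fix x assume "x \<in> Bv"
      then consider (A) i where "i < n" "x = b i" | (Cc) j where "j < m" "x = d j" by (auto simp: Bv_def)
      then show "x \<in> (\<lambda>r. last (pi r)) ` I"
      proof cases
        case A then show ?thesis using tpi[of i] by (auto simp: I_def intro!: image_eqI[of _ _ i])
      next
        case Cc then show ?thesis using tpi[of "n + j"] by (auto simp: I_def intro!: image_eqI[of _ _ "n + j"])
      qed
    qed
    show "(\<lambda>r. last (pi r)) ` I \<subseteq> Bv"
      using tpi by (auto simp: Bv_def I_def)
  qed
  have W_eq: "W = (\<Union>r\<in>I. set (pi r))"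
  proof
    show "W \<subseteq> (\<Union>r\<in>I. set (pi r))"
    proof
      fix x assume "x \<in> W"
      then consider (A) i where "i < n" "x \<in> set (P i)" | (Cc) j where "j < m" "x \<in> set (Q j)" by (auto simp: W_def)
      then show "x \<in> (\<Union>r\<in>I. set (pi r))"
      proof cases
        case A then show ?thesis using piP[of i] by (auto simp: I_def intro!: bexI[of _ i])
      next
        case Cc then show ?thesis using piQ[of j] by (auto simp: I_def intro!: bexI[of _ "n + j"])
      qed
    qed
    show "(\<Union>r\<in>I. set (pi r)) \<subseteq> W"
    proof
      fix x assume "x \<in> (\<Union>r\<in>I. set (pi r))"
      then obtain r where "r \<in> I" "x \<in> set (pi r)" by blast
      then show "x \<in> W"
      proof (cases "r < n")
        case True then show ?thesis using \<open>x \<in> set (pi r)\<close> by (auto simp: W_def pi_def)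
      next
        case False
        then have "r - n < m" using \<open>r \<in> I\<close> by (auto simp: I_def)
        then show ?thesis using False \<open>x \<in> set (pi r)\<close> unfolding W_def pi_def by auto
      qed
    qed
  qed
  have AvW: "Av \<subseteq> W" unfolding Av_eq W_eq using hmem by blast
  have BvW: "Bv \<subseteq> W" unfolding Bv_eq W_eq using tmem by blast
  have AB: "Av \<inter> Bv = {}"
  proof -
    have "x \<notin> Bv" if "x \<in> Av" for x
    proof -
      from that consider (A) "x \<in> a ` {..<n}" | (Cc) "x \<in> c ` {..<m}" unfolding Av_def by blast
      then show ?thesis
      proof cases
        case A then show ?thesis using dab dad unfolding Bv_def by blast
      next
        case Cc then show ?thesis using dbc dcd unfolding Bv_def by blast
      qed
    qed
    then show ?thesis by blast
  qed
  have Aend: "Av \<inter> set (pi r) = {hd (pi r)}" if r: "r \<in> I" for r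
  proof
    show "{hd (pi r)} \<subseteq> Av \<inter> set (pi r)" using hmem[OF r] r unfolding Av_eq by blast
    show "Av \<inter> set (pi r) \<subseteq> {hd (pi r)}"
    proof
      fix x assume x: "x \<in> Av \<inter> set (pi r)"
      then obtain r' where r': "r' \<in> I" "x = hd (pi r')" unfolding Av_eq by blast
      then have "r' = r" using memu[OF r'(1) r, of x] hmem[OF r'(1)] x by blast
      then show "x \<in> {hd (pi r)}" using r' by simp
    qed
  qed
  have Bend: "Bv \<inter> set (pi r) = {last (pi r)}" if r: "r \<in> I" for r
  proof
    show "{last (pi r)} \<subseteq> Bv \<inter> set (pi r)" using tmem[OF r] r unfolding Bv_eq by blast
    show "Bv \<inter> set (pi r) \<subseteq> {last (pi r)}"
    proof
      fix x assume x: "x \<in> Bv \<inter> set (pi r)"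
      then obtain r' where r': "r' \<in> I" "x = last (pi r')" unfolding Bv_eq by blast
      then have "r' = r" using memu[OF r'(1) r, of x] tmem[OF r'(1)] x by blast
      then show "x \<in> {last (pi r)}" using r' by simp
    qed
  qed
  have zsp: "zs \<notin> set (pi r)" and ztp: "zt \<notin> set (pi r)" if "r \<in> I" for r
    using zsW ztW that unfolding W_eq by blast+
  have zsA: "zs \<notin> Av" "zs \<notin> Bv" and ztA: "zt \<notin> Av" "zt \<notin> Bv"
    using AvW BvW zsW ztW by blast+
  have PE: "(\<exists>i<n. path_edge (P i) x y) \<or> (\<exists>j<m. path_edge (Q j) x y) \<longleftrightarrow> (\<exists>r\<in>I. path_edge (pi r) x y)" for x y
  proof
    assume "(\<exists>i<n. path_edge (P i) x y) \<or> (\<exists>j<m. path_edge (Q j) x y)"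
    then show "\<exists>r\<in>I. path_edge (pi r) x y"
    proof
      assume "\<exists>i<n. path_edge (P i) x y"
      then obtain i where "i < n" "path_edge (P i) x y" by blast
      then show ?thesis using piP[of i] by (auto simp: I_def intro!: bexI[of _ i])
    next
      assume "\<exists>j<m. path_edge (Q j) x y"
      then obtain j where "j < m" "path_edge (Q j) x y" by blast
      then show ?thesis using piQ[of j] by (auto simp: I_def intro!: bexI[of _ "n + j"])
    qed
  next
    assume "\<exists>r\<in>I. path_edge (pi r) x y"
    then obtain r where "r \<in> I" "path_edge (pi r) x y" by blast
    then show "(\<exists>i<n. path_edge (P i) x y) \<or> (\<exists>j<m. path_edge (Q j) x y)"
    proof (cases "r < n")
      case True then show ?thesis using \<open>path_edge (pi r) x y\<close> by (auto simp: pi_def)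
    next
      case False
      then have "r - n < m" using \<open>r \<in> I\<close> by (auto simp: I_def)
      then show ?thesis using False \<open>path_edge (pi r) x y\<close> unfolding pi_def by auto
    qed
  qed
  have Edef2: "E x y \<longleftrightarrow> (\<exists>r\<in>I. path_edge (pi r) x y) \<or> AE x y \<or> BE x y \<or>
           (x = zs \<and> y \<in> Av) \<or> (y = zs \<and> x \<in> Av) \<or> (x = zt \<and> y \<in> Bv) \<or> (y = zt \<and> x \<in> Bv)" for x y
    unfolding Edef[rule_format] PE[symmetric] by (simp only: disj_assoc)
  have AEsym: "AE x y \<Longrightarrow> AE y x" for x y unfolding AE_def by (elim disjE exE conjE) auto
  have BEsym: "BE x y \<Longrightarrow> BE y x" for x y unfolding BE_def by (elim disjE exE conjE) auto
  have cinj: "c j = c j' \<longleftrightarrow> j = j'" if "j < m" "j' < m" for j j' using ic that by (auto simp: inj_on_def)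
  have dinj: "d j = d j' \<longleftrightarrow> j = j'" if "j < m" "j' < m" for j j' using id that by (auto simp: inj_on_def)
  have acne: "a i \<noteq> c j" if "i < n" "j < m" for i j using dac that by blast
  have bdne: "b i \<noteq> d j" if "i < n" "j < m" for i j using dbd that by blast
  have AEirr0: "AE x x \<Longrightarrow> False" for x
  proof -
    assume "AE x x"
    then have "(\<exists>j<m. \<exists>j'<m. j \<noteq> j' \<and> c j = c j') \<or> (\<exists>i<n. \<exists>j<m. a i = c j)"
      unfolding AE_def by (elim disjE exE conjE) fastforce+
    then show False using cinj acne by blast
  qed
  have BEirr0: "BE x x \<Longrightarrow> False" for x
  proof -
    assume "BE x x"
    then have "(\<exists>j<m. \<exists>j'<m. j \<noteq> j' \<and> d j = d j') \<or> (\<exists>i<n. \<exists>j<m. b i = d j)"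
      unfolding BE_def by (elim disjE exE conjE) fastforce+
    then show False using dinj bdne by blast
  qed
  have AEirr: "\<not> AE x x" for x using AEirr0 by blast
  have BEirr: "\<not> BE x x" for x using BEirr0 by blast
  have AEin: "AE x y \<Longrightarrow> x \<in> Av \<and> y \<in> Av" for x y unfolding AE_def Av_def by (elim disjE exE conjE) auto
  have BEin: "BE x y \<Longrightarrow> x \<in> Bv \<and> y \<in> Bv" for x y unfolding BE_def Bv_def by (elim disjE exE conjE) auto
  have pe_irr: "\<not> path_edge (pi r) x x" if "r \<in> I" for r x using path_edge_irr[OF dpi[OF that]] .
  have Eirr: "\<not> E x x" for x
  proof -
    have "\<not> (\<exists>r\<in>I. path_edge (pi r) x x)" using pe_irr by blast
    then show ?thesis using AEirr BEirr zsA ztA Edef2[of x x] by blast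
  qed
  have pe_end: "False" if "r \<in> I" "path_edge (pi r) x y" "x \<in> Av" "y \<in> Av" for r x y
  proof -
    have "x \<in> set (pi r)" "y \<in> set (pi r)" using path_edge_mem[OF that(2)] by auto
    then have "x = hd (pi r)" "y = hd (pi r)" using Aend[OF that(1)] that(3,4) by (metis IntI singletonD)+
    then have "x = y" by simp
    then show False using pe_irr that(1,2) by blast
  qed
  have pe_endB: "False" if "r \<in> I" "path_edge (pi r) x y" "x \<in> Bv" "y \<in> Bv" for r x y
  proof -
    have "x \<in> set (pi r)" "y \<in> set (pi r)" using path_edge_mem[OF that(2)] by auto
    then have "x = last (pi r)" "y = last (pi r)" using Bend[OF that(1)] that(3,4) by (metis IntI singletonD)+
    then have "x = y" by simp
    then show False using pe_irr that(1,2) by blast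
  qed
  have EAE: "E x y \<longleftrightarrow> AE x y" if xy: "x \<in> Av" "y \<in> Av" for x y
  proof -
    have "\<not> (\<exists>r\<in>I. path_edge (pi r) x y)" using pe_end xy by blast
    moreover have "\<not> BE x y" using BEin AB xy by blast
    moreover have "x \<noteq> zs" "y \<noteq> zs" "x \<noteq> zt" "y \<noteq> zt" using zsA ztA xy by auto
    ultimately show ?thesis using Edef2[of x y] by simp
  qed
  have EBE: "E x y \<longleftrightarrow> BE x y" if xy: "x \<in> Bv" "y \<in> Bv" for x y
  proof -
    have "\<not> (\<exists>r\<in>I. path_edge (pi r) x y)" using pe_endB xy by blast
    moreover have "\<not> AE x y" using AEin AB xy by blast
    moreover have "x \<noteq> zs" "y \<noteq> zs" "x \<noteq> zt" "y \<noteq> zt" using zsA ztA xy by auto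
    ultimately show ?thesis using Edef2[of x y] by simp
  qed
  have ts: "twoside V E I pi (insert zs Av) (insert zt Bv)"
  proof
    show "E y x" if exy: "E x y" for x y
    proof -
      from exy have "(\<exists>r\<in>I. path_edge (pi r) x y) \<or> AE x y \<or> BE x y \<or>
           (x = zs \<and> y \<in> Av) \<or> (y = zs \<and> x \<in> Av) \<or> (x = zt \<and> y \<in> Bv) \<or> (y = zt \<and> x \<in> Bv)"
        using Edef2 by blast
      then have "(\<exists>r\<in>I. path_edge (pi r) y x) \<or> AE y x \<or> BE y x \<or>
           (y = zs \<and> x \<in> Av) \<or> (x = zs \<and> y \<in> Av) \<or> (y = zt \<and> x \<in> Bv) \<or> (x = zt \<and> y \<in> Bv)"
      proof (elim disjE)
        assume "\<exists>r\<in>I. path_edge (pi r) x y"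
        then obtain r where "r \<in> I" "path_edge (pi r) x y" by blast
        then have "path_edge (pi r) y x" using path_edge_sym by metis
        then show ?thesis using \<open>r \<in> I\<close> by blast
      qed (use AEsym BEsym in blast)+
      then show ?thesis using Edef2 by blast
    qed
    show "\<not> E x x" for x by (rule Eirr)
    show "distinct (pi r)" if "r \<in> I" for r using dpi that .
    show "3 \<le> length (pi r)" if "r \<in> I" for r using lpi that .
    show "set (pi r) \<inter> set (pi r') = {}" if "r \<in> I" "r' \<in> I" "r \<noteq> r'" for r r' using pdisj that .
    show "insert zs Av \<inter> insert zt Bv = {}" using AB zs2 zsA ztA by blast
    show "insert zs Av \<inter> set (pi r) = {hd (pi r)}" if "r \<in> I" for r using Aend zsp that by auto
    show "insert zt Bv \<inter> set (pi r) = {last (pi r)}" if "r \<in> I" for r using Bend ztp that by auto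
    show "V \<subseteq> insert zs Av \<union> insert zt Bv \<union> (\<Union>r\<in>I. set (pi r))" using Vd W_eq by auto
    show "set (pi r) \<subseteq> V" if "r \<in> I" for r using Vd W_eq that by auto
    show "E x y" if "r \<in> I" "path_edge (pi r) x y" for r x y using Edef2 that by blast
    show "(\<exists>r\<in>I. path_edge (pi r) x y) \<or> (x \<in> insert zs Av \<and> y \<in> insert zs Av) \<or> (x \<in> insert zt Bv \<and> y \<in> insert zt Bv)"
      if exy: "E x y" for x y
    proof -
      from exy have "(\<exists>r\<in>I. path_edge (pi r) x y) \<or> AE x y \<or> BE x y \<or>
           (x = zs \<and> y \<in> Av) \<or> (y = zs \<and> x \<in> Av) \<or> (x = zt \<and> y \<in> Bv) \<or> (y = zt \<and> x \<in> Bv)"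
        using Edef2 by blast
      then show ?thesis
      proof (elim disjE)
        assume "AE x y" then show ?thesis using AEin by blast
      next
        assume "BE x y" then show ?thesis using BEin by blast
      qed blast+
    qed
    show "nopc (insert zs Av) E"
    proof (rule nopc_dom)
      have "nopc Av AE" unfolding Av_def AE_def by (rule split_nopc[OF ia ic dac nm])
      then show "nopc Av E" using nopc_cong EAE by blast
      show "E zs x \<and> E x zs" if "x \<in> Av" "x \<noteq> zs" for x using that Edef2 by blast
    qed
    show "nopc (insert zt Bv) E"
    proof (rule nopc_dom)
      have nm': "\<not> (\<exists>i<n. \<exists>i'<n. \<exists>j<m. \<exists>j'<m. \<not> R i j \<and> \<not> R i' j' \<and> \<not> \<not> R i j' \<and> \<not> \<not> R i' j)"
        using nm by blast
      have "nopc Bv BE" unfolding Bv_def BE_def by (rule split_nopc[OF ib id dbd nm'])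
      then show "nopc Bv E" using nopc_cong EBE by blast
      show "E zt x \<and> E x zt" if "x \<in> Bv" "x \<noteq> zt" for x using that Edef2 by blast
    qed
  qed
  interpret T: twoside V E I pi "insert zs Av" "insert zt Bv" by (rule ts)
  have ainj: "a i = a i' \<longleftrightarrow> i = i'" if "i < n" "i' < n" for i i' using ia that by (auto simp: inj_on_def)
  have binj: "b i = b i' \<longleftrightarrow> i = i'" if "i < n" "i' < n" for i i' using ib that by (auto simp: inj_on_def)
  have aA: "a i \<in> Av" if "i < n" for i using that by (simp add: Av_def)
  have cA: "c j \<in> Av" if "j < m" for j using that by (simp add: Av_def)
  have bB: "b i \<in> Bv" if "i < n" for i using that by (simp add: Bv_def)
  have dB: "d j \<in> Bv" if "j < m" for j using that by (simp add: Bv_def)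
  have Eaa: "\<not> E (a i) (a i')" if ii: "i < n" "i' < n" for i i'
  proof
    assume "E (a i) (a i')"
    then have "AE (a i) (a i')" using EAE aA ii by blast
    then have "(\<exists>j<m. a i = c j) \<or> (\<exists>j<m. a i' = c j)" unfolding AE_def by (elim disjE exE conjE) fastforce+
    then show False using acne ii by blast
  qed
  have Ebb: "\<not> E (b i) (b i')" if ii: "i < n" "i' < n" for i i'
  proof
    assume "E (b i) (b i')"
    then have "BE (b i) (b i')" using EBE bB ii by blast
    then have "(\<exists>j<m. b i = d j) \<or> (\<exists>j<m. b i' = d j)" unfolding BE_def by (elim disjE exE conjE) fastforce+
    then show False using bdne ii by blast
  qed
  have Eac: "E (a i) (c j) \<longleftrightarrow> R i j" if ij: "i < n" "j < m" for i j
  proof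
    assume "E (a i) (c j)"
    then have "AE (a i) (c j)" using EAE aA cA ij by blast
    then have "(\<exists>j0<m. a i = c j0) \<or> (\<exists>i0<n. \<exists>j0<m. R i0 j0 \<and> a i = a i0 \<and> c j = c j0)"
      unfolding AE_def by (elim disjE exE conjE) fastforce+
    then show "R i j" using acne ainj cinj ij by blast
  next
    assume "R i j"
    then have "AE (a i) (c j)" unfolding AE_def using ij by blast
    then show "E (a i) (c j)" using EAE aA cA ij by blast
  qed
  have Ebd: "E (b i) (d j) \<longleftrightarrow> \<not> R i j" if ij: "i < n" "j < m" for i j
  proof
    assume "E (b i) (d j)"
    then have "BE (b i) (d j)" using EBE bB dB ij by blast
    then have "(\<exists>j0<m. b i = d j0) \<or> (\<exists>i0<n. \<exists>j0<m. \<not> R i0 j0 \<and> b i = b i0 \<and> d j = d j0)"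
      unfolding BE_def by (elim disjE exE conjE) fastforce+
    then show "\<not> R i j" using bdne binj dinj ij by blast
  next
    assume "\<not> R i j"
    then have "BE (b i) (d j)" unfolding BE_def using ij by blast
    then show "E (b i) (d j)" using EBE bB dB ij by blast
  qed
  have Ezs: "E x zs" "E zs x" if "x \<in> Av" for x using that Edef2 by blast+
  have Ezt: "E x zt" "E zt x" if "x \<in> Bv" for x using that Edef2 by blast+
  have nz: "\<not> E zt zs"
  proof
    assume "E zt zs"
    then have "(\<exists>r\<in>I. path_edge (pi r) zt zs) \<or> AE zt zs \<or> BE zt zs \<or> zt \<in> Av \<or> zs \<in> Bv"
      using Edef2 zs2 by blast
    moreover have "\<not> (\<exists>r\<in>I. path_edge (pi r) zt zs)"
    proof
      assume "\<exists>r\<in>I. path_edge (pi r) zt zs"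
      then obtain r where "r \<in> I" "path_edge (pi r) zt zs" by blast
      then show False using path_edge_mem[of "pi r" zt zs] ztp by blast
    qed
    ultimately show False using AEin BEin zsA ztA by blast
  qed
  have hP: "hd (pi i) = a i" "last (pi i) = b i" if "i < n" for i using hpi tpi that by (auto simp: I_def)
  have hQ: "hd (pi r) = c (r - n)" "last (pi r) = d (r - n)" "r - n < m" if "r \<in> I" "\<not> r < n" for r
    using hpi tpi that by (auto simp: I_def)
  have Kh: "\<exists>K. hole V E K \<and> set (pi r) \<subseteq> K \<and> set (pi r') \<subseteq> K \<and> (zs \<in> K \<or> zt \<in> K) \<and>
              (r' < n \<longrightarrow> zs \<in> K \<and> zt \<in> K)"
    if rr: "r < n" "r' \<in> I" "r \<noteq> r'" for r r'
  proof -
    have rI: "r \<in> I" using rr n2 by (simp add: I_def)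
    show ?thesis
    proof (cases "r' < n")
      case True
      have "hole V E (set (pi r) \<union> set (pi r') \<union> set [zs] \<union> set [zt])"
      proof (rule T.build_hole[OF rI rr(2,3)])
        show "E (hd (pi r)) y \<and> E y (hd (pi r')) \<and> \<not> E (hd (pi r)) (hd (pi r'))" if "[zs] = [y]" for y
          using that hP[OF rr(1)] hP[OF True] Ezs aA rr(1) True Eaa[OF rr(1) True] by auto
        show "E (last (pi r)) y \<and> E y (last (pi r')) \<and> \<not> E (last (pi r)) (last (pi r'))" if "[zt] = [y]" for y
          using that hP[OF rr(1)] hP[OF True] Ezt bB rr(1) True Ebb[OF rr(1) True] by auto
      qed (use zsp ztp rI rr Vd nz in auto)
      then show ?thesis using True by auto
    next
      case False
      note q = hQ[OF rr(2) False]
      show ?thesis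
      proof (cases "R r (r' - n)")
        case True
        have "hole V E (set (pi r) \<union> set (pi r') \<union> set [] \<union> set [zt])"
        proof (rule T.build_hole[OF rI rr(2,3)])
          show "E (hd (pi r)) (hd (pi r'))" using hP[OF rr(1)] q Eac[OF rr(1) q(3)] True by simp
          show "E (last (pi r)) y \<and> E y (last (pi r')) \<and> \<not> E (last (pi r)) (last (pi r'))" if "[zt] = [y]" for y
            using that hP[OF rr(1)] q Ezt bB[OF rr(1)] dB[OF q(3)] Ebd[OF rr(1) q(3)] True by auto
        qed (use zsp ztp rI rr Vd in auto)
        then show ?thesis using False by auto
      next
        case False2: False
        have "hole V E (set (pi r) \<union> set (pi r') \<union> set [zs] \<union> set [])"
        proof (rule T.build_hole[OF rI rr(2,3)])
          show "E (hd (pi r)) y \<and> E y (hd (pi r')) \<and> \<not> E (hd (pi r)) (hd (pi r'))" if "[zs] = [y]" for y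
            using that hP[OF rr(1)] q Ezs aA[OF rr(1)] cA[OF q(3)] Eac[OF rr(1) q(3)] False2 by auto
          show "E (last (pi r)) (last (pi r'))" using hP[OF rr(1)] q Ebd[OF rr(1) q(3)] False2 by simp
        qed (use zsp ztp rI rr Vd in auto)
        then show ?thesis using False by auto
      qed
    qed
  qed
  have n0: "0 < n" "(1::nat) < n" using n2 by auto
  have I1: "(1::nat) \<in> I" "(0::nat) \<in> I" using n2 by (auto simp: I_def)
  obtain K0 where K0: "hole V E K0" "set (pi 0) \<subseteq> K0" "set (pi 1) \<subseteq> K0" "zs \<in> K0" "zt \<in> K0"
    using Kh[OF n0(1) I1(1)] n0 by auto
  have Z: "holes_equivalent V E X K0"
    if X: "hole V E X" "i < n" "set (pi i) \<subseteq> X" "z \<in> X" "z = zs \<or> z = zt" for X i z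
  proof -
    have iI: "i \<in> I" using X(2) by (simp add: I_def)
    have zK0: "z \<in> K0" using X(5) K0 by auto
    have zp: "z \<notin> set (pi j)" if "j \<in> I" for j using X(5) zsp ztp that by auto
    show ?thesis
    proof (cases "i = 0")
      case True
      then show ?thesis
        using equiv_step[OF X(1) K0(1) T.close_path[OF X(1) K0(1) I1(2) _ K0(2) X(4) zK0 zp[OF I1(2)]]] X(3) by simp
    next
      case False
      obtain K where K: "hole V E K" "set (pi 0) \<subseteq> K" "set (pi i) \<subseteq> K" "zs \<in> K" "zt \<in> K"
        using Kh[OF n0(1) iI] False X(2) by auto
      have zK: "z \<in> K" using X(5) K by auto
      have "holes_equivalent V E X K"
        using equiv_step[OF X(1) K(1) T.close_path[OF X(1) K(1) iI X(3) K(3) X(4) zK zp[OF iI]]] .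
      moreover have "holes_equivalent V E K K0"
        using equiv_step[OF K(1) K0(1) T.close_path[OF K(1) K0(1) I1(2) K(2) K0(2) K(4) K0(4) zsp[OF I1(2)]]] .
      ultimately show ?thesis using equiv_trans by blast
    qed
  qed
  have toK0: "holes_equivalent V E X K0" if X: "hole V E X" for X
  proof -
    obtain r r' where rr: "r \<in> I" "r' \<in> I" "r \<noteq> r'" "set (pi r) \<subseteq> X" "set (pi r') \<subseteq> X"
      using T.two_paths[OF X] by blast
    show ?thesis
    proof (cases "r < n \<and> r' < n")
      case True
      obtain K where K: "hole V E K" "set (pi r) \<subseteq> K" "set (pi r') \<subseteq> K" "zs \<in> K"
        using Kh[OF _ rr(2,3)] True by blast
      have "holes_equivalent V E X K"
        using equiv_step[OF X K(1) T.close_two[OF X K(1) rr(1,2,3,4) K(2) rr(5) K(3)]] .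
      then show ?thesis using Z[OF K(1) _ K(2,4)] True equiv_trans by blast
    next
      case False
      then obtain q where q: "q \<in> I" "\<not> q < n" "set (pi q) \<subseteq> X" using rr by blast
      have q0: "0 \<noteq> q" using q(2) n0 by auto
      obtain K where K: "hole V E K" "set (pi 0) \<subseteq> K" "set (pi q) \<subseteq> K" "zs \<in> K \<or> zt \<in> K"
        using Kh[OF n0(1) q(1) q0] by blast
      have lq: "length (pi q) = Suc (Suc L)"
        using q Qp unfolding pi_def I_def is_path_def by auto
      have "card (set (pi q)) \<ge> 4" using distinct_card[OF dpi[OF q(1)]] lq L2 by simp
      then have "holes_close X K" using close_sub[OF X, of "set (pi q)" K] q(3) K(3) by auto
      then have "holes_equivalent V E X K" using equiv_step[OF X K(1)] by blast
      moreover have "holes_equivalent V E K K0"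
      proof (cases "zs \<in> K")
        case True then show ?thesis using Z[OF K(1) n0(1) K(2) True] by blast
      next
        case False then show ?thesis using Z[OF K(1) n0(1) K(2), of zt] K(4) by blast
      qed
      ultimately show ?thesis using equiv_trans by blast
    qed
  qed
  show ?thesis using toK0[OF C] toK0[OF C'] equiv_sym equiv_trans by blast
qed


theorem mainTheorem14:
  fixes l :: nat and V :: "'a set" and E :: "'a \<Rightarrow> 'a \<Rightarrow> bool"
  assumes "l \<ge> 7"
    and "apexed_frame l V E"
    and "hole V E C"
    and "hole V E C'"
  shows "holes_equivalent V E C C'"
proof -
  from assms(2) consider (odd) "odd_apexed_frame l V E" | (even) "even_apexed_frame l V E"
    unfolding apexed_frame_def by blast
  then show ?thesis
  proof cases
    case odd
    then show ?thesis unfolding odd_apexed_frame_def Let_def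
      apply (elim conjE exE)
      subgoal premises p for k a b P EA z N
      proof -
        have L2: "2 \<le> (l - 3) div 2" using assms(1) by simp
        from p(13) show ?thesis
        proof (elim disjE conjE)
          assume nc: "\<not> connected_graph (a ` {..<k}) (\<lambda>x y. \<exists>i<k. \<exists>j<k. i \<noteq> j \<and> x = a i \<and> y = a j \<and> EA i j)"
            and N: "N = a ` {..<k}"
          show ?thesis
            by (rule odd_core[of k "(l - 3) div 2" a b P EA z V E C C'])
               (use p L2 nc N assms(3,4) in simp_all)
        next
          assume nc: "\<not> connected_graph (b ` {..<k}) (\<lambda>x y. \<exists>i<k. \<exists>j<k. i \<noteq> j \<and> x = b i \<and> y = b j \<and> \<not> EA i j)"
            and N: "N = b ` {..<k}"
          have ba: "\<forall>i<k. \<forall>j<k. b i \<noteq> a j" using p(5) by metis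
          show ?thesis
          proof (rule odd_core[of k "(l - 3) div 2" b a "\<lambda>i. rev (P i)" "\<lambda>i j. \<not> EA i j" z V E C C'])
            show "\<forall>x y. E x y \<longleftrightarrow> (\<exists>i<k. path_edge (rev (P i)) x y) \<or>
                 (\<exists>i<k. \<exists>j<k. i \<noteq> j \<and> x = b i \<and> y = b j \<and> \<not> EA i j) \<or>
                 (\<exists>i<k. \<exists>j<k. i \<noteq> j \<and> x = a i \<and> y = a j \<and> \<not> \<not> EA i j) \<or>
                 (x = z \<and> y \<in> b ` {..<k}) \<or> (y = z \<and> x \<in> b ` {..<k})"
              using p(16) N by (simp add: path_edge_rev) blast
          qed (use p L2 nc N assms(3,4) ba in \<open>auto simp: is_path_def hd_rev last_rev\<close>)
        qed
      qed
      done
  next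
    case even
    then show ?thesis unfolding even_apexed_frame_def Let_def
      apply (elim conjE exE)
      subgoal premises p for n m a b c d P Q R z1 z2
      proof -
        have l8: "8 \<le> l" using assms(1) p(1) by presburger
        have L2: "2 \<le> l div 2 - 2" using l8 by simp
        have eqL: "l div 2 - 1 = Suc (l div 2 - 2)" using l8 by simp
        show ?thesis
          by (rule even_core[where n=n and m=m and L="l div 2 - 2" and a=a and b=b and c=c and d=d and P=P and Q=Q and R=R and zs=z1 and zt=z2 and V=V and E=E and C=C and C'=C'])
             (use p L2 eqL assms(3,4) in simp_all)
      qed
      done
  qed
qed


end
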